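(* For each fixed $k\ge3$, the probability that a uniformly random standard Young tableau with $n$ cells has the entry $k$ in row $1$, column $2$ equals \[\frac{k-1}{k!}+\frac{k-4}{3(k-3)!}\,\frac1{n^{3/2}}+O\!\left(\frac1{n^2}\right)\qquad(n\to\infty).\]
   Context: A standard Young tableau with $n$ cells is a Ferrers diagram of a partition of $n$ filled bijectively with $1,\dots,n$, entries increasing along rows and down columns; the uniform distribution is over all such tableaux of all shapes with $n$ cells. *)

theory Defs
  imports Complex_Main "HOL-Library.Landau_Symbols"
begin

text \<open>Cells are pairs (row, column), 0-indexed: row 1, column 2 of the paper is the cell (0, 1).
  A Ferrers diagram is a finite down-closed set of cells.\<close>

definition ferrers :: "(nat \<times> nat) set \<Rightarrow> bool" where
  "ferrers S \<longleftrightarrow> finite S \<and>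
     (\<forall>i j i' j'. (i, j) \<in> S \<and> i' \<le> i \<and> j' \<le> j \<longrightarrow> (i', j') \<in> S)"

text \<open>Outside its shape T is 0, so a tableau determines its shape.\<close>

definition is_syt :: "nat \<Rightarrow> (nat \<times> nat \<Rightarrow> nat) \<Rightarrow> bool" where
  "is_syt n T \<longleftrightarrow>
     (let S = {c. T c \<noteq> 0} in
        ferrers S \<and> bij_betw T S {1..n} \<and>
        (\<forall>i j. (i, Suc j) \<in> S \<longrightarrow> T (i, j) < T (i, Suc j)) \<and>
        (\<forall>i j. (Suc i, j) \<in> S \<longrightarrow> T (i, j) < T (Suc i, j)))"

definition SYT :: "nat \<Rightarrow> (nat \<times> nat \<Rightarrow> nat) set" where
  "SYT n = {T. is_syt n T}"

definition prob_entry_12 :: "nat \<Rightarrow> nat \<Rightarrow> real" where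
  "prob_entry_12 k n = real (card {T \<in> SYT n. T (0, 1) = k}) / real (card (SYT n))"

end

theory Submission
  imports Defs "HOL-Library.FuncSet" "HOL-Real_Asymp.Real_Asymp"
begin


definition ss :: "nat \<Rightarrow> real" where "ss n = 1 / sqrt (real n)"

definition expn :: "(nat \<Rightarrow> real) \<Rightarrow> real \<Rightarrow> real \<Rightarrow> real \<Rightarrow> real \<Rightarrow> bool" where
  "expn f a b c d \<longleftrightarrow>
     (\<lambda>n. f n - (a + b * ss n + c * ss n ^ 2 + d * ss n ^ 3)) \<in> O(\<lambda>n. ss n ^ 4)"

lemma ss_nonneg: "0 \<le> ss n" by (simp add: ss_def)
lemma ss_le1: "ss n \<le> 1"
  by (cases "n = 0") (auto simp: ss_def)

lemma ss_pow_le1: "ss n ^ k \<le> 1"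
  using ss_nonneg ss_le1 by (simp add: power_le_one)

lemma poly_O1: "(\<lambda>n. a + b * ss n + c * ss n ^ 2 + d * ss n ^ 3) \<in> O(\<lambda>_. 1)"
proof (rule bigoI[where c="\<bar>a\<bar> + \<bar>b\<bar> + \<bar>c\<bar> + \<bar>d\<bar>"], rule always_eventually, rule allI)
  fix n
  have h1: "\<bar>b * ss n\<bar> \<le> \<bar>b\<bar>" using ss_nonneg[of n] ss_le1[of n]
    by (simp add: abs_mult mult_left_le)
  have h2: "\<bar>c * ss n ^ 2\<bar> \<le> \<bar>c\<bar>" using ss_nonneg[of n] ss_pow_le1[of n 2]
    by (simp add: abs_mult mult_left_le)
  have h3: "\<bar>d * ss n ^ 3\<bar> \<le> \<bar>d\<bar>" using ss_nonneg[of n] ss_pow_le1[of n 3]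
    by (simp add: abs_mult mult_left_le)
  have "\<bar>a + b * ss n + c * ss n ^ 2 + d * ss n ^ 3\<bar> \<le> \<bar>a\<bar> + \<bar>b * ss n\<bar> + \<bar>c * ss n ^ 2\<bar> + \<bar>d * ss n ^ 3\<bar>"
    by linarith
  then show "norm (a + b * ss n + c * ss n ^ 2 + d * ss n ^ 3) \<le> (\<bar>a\<bar> + \<bar>b\<bar> + \<bar>c\<bar> + \<bar>d\<bar>) * norm (1::real)"
    using h1 h2 h3 by simp
qed

lemma ss4_O1: "(\<lambda>n. ss n ^ 4) \<in> O(\<lambda>_. 1)"
  using poly_O1[of 0 0 0 1] 
  by (intro bigoI[where c=1] always_eventually) (simp add: ss_pow_le1 ss_nonneg)

lemma expn_O1: assumes "expn f a b c d" shows "f \<in> O(\<lambda>_. 1)"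
proof -
  have "(\<lambda>n. f n - (a + b * ss n + c * ss n ^ 2 + d * ss n ^ 3)) \<in> O(\<lambda>_. 1)"
    using assms unfolding expn_def using ss4_O1 landau_o.big_trans by blast
  from sum_in_bigo(1)[OF this poly_O1[of a b c d]] show ?thesis by simp
qed

lemma expn_cong:
  assumes "expn f a b c d" "eventually (\<lambda>n. f n = g n) at_top"
  shows "expn g a b c d"
  using assms unfolding expn_def
  by (subst (asm) landau_o.big.in_cong[where g="\<lambda>n. g n - (a + b * ss n + c * ss n ^ 2 + d * ss n ^ 3)"])
     (auto elim!: eventually_mono)

lemma expn_coeff_cong:
  assumes "expn f a b c d" "a = a'" "b = b'" "c = c'" "d = d'"
  shows "expn f a' b' c' d'" using assms by simp

lemma expn_mult:
  assumes f: "expn f a0 a1 a2 a3" and h: "expn h b0 b1 b2 b3"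
  shows "expn (\<lambda>n. f n * h n) (a0*b0) (a0*b1+a1*b0) (a0*b2+a1*b1+a2*b0) (a0*b3+a1*b2+a2*b1+a3*b0)"
proof -
  define P where "P n = a0 + a1 * ss n + a2 * ss n ^ 2 + a3 * ss n ^ 3" for n
  define Q where "Q n = b0 + b1 * ss n + b2 * ss n ^ 2 + b3 * ss n ^ 3" for n
  define E1 where "E1 n = f n - P n" for n
  define E2 where "E2 n = h n - Q n" for n
  define R where "R n = (a1*b3 + a2*b2 + a3*b1) + (a2*b3 + a3*b2) * ss n + a3*b3 * ss n ^ 2" for n
  have E1: "E1 \<in> O(\<lambda>n. ss n ^ 4)" using f unfolding expn_def E1_def P_def by simp
  have E2: "E2 \<in> O(\<lambda>n. ss n ^ 4)" using h unfolding expn_def E2_def Q_def by simp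
  have hO: "h \<in> O(\<lambda>_. 1)" using expn_O1[OF h] .
  have PO: "P \<in> O(\<lambda>_. 1)" unfolding P_def by (rule poly_O1)
  have RO: "R \<in> O(\<lambda>_. 1)" using poly_O1[of "a1*b3 + a2*b2 + a3*b1" "a2*b3 + a3*b2" "a3*b3" 0]
    unfolding R_def by simp
  have t1: "(\<lambda>n. E1 n * h n) \<in> O(\<lambda>n. ss n ^ 4)"
    using landau_o.big.mult[OF E1 hO] by simp
  have t2: "(\<lambda>n. P n * E2 n) \<in> O(\<lambda>n. ss n ^ 4)"
    using landau_o.big.mult[OF PO E2] by simp
  have t3: "(\<lambda>n. ss n ^ 4 * R n) \<in> O(\<lambda>n. ss n ^ 4)"
    using landau_o.big.mult[OF landau_o.big_refl RO] by simp
  have eq: "(\<lambda>n. f n * h n - (a0*b0 + (a0*b1+a1*b0) * ss n + (a0*b2+a1*b1+a2*b0) * ss n ^ 2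
            + (a0*b3+a1*b2+a2*b1+a3*b0) * ss n ^ 3))
        = (\<lambda>n. E1 n * h n + P n * E2 n + ss n ^ 4 * R n)"
    by (rule ext) (simp add: E1_def E2_def P_def Q_def R_def algebra_simps power2_eq_square power3_eq_cube power4_eq_xxxx)
  show ?thesis unfolding expn_def eq
    by (intro sum_in_bigo t1 t2 t3)
qed


lemma expn_add:
  assumes "expn f a0 a1 a2 a3" "expn h b0 b1 b2 b3"
  shows "expn (\<lambda>n. f n + h n) (a0+b0) (a1+b1) (a2+b2) (a3+b3)"
proof -
  have "(\<lambda>n. (f n - (a0 + a1 * ss n + a2 * ss n ^ 2 + a3 * ss n ^ 3)) + (h n - (b0 + b1 * ss n + b2 * ss n ^ 2 + b3 * ss n ^ 3))) \<in> O(\<lambda>n. ss n ^ 4)"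
    using assms unfolding expn_def by (rule sum_in_bigo(1))
  moreover have "(\<lambda>n. (f n - (a0 + a1 * ss n + a2 * ss n ^ 2 + a3 * ss n ^ 3)) + (h n - (b0 + b1 * ss n + b2 * ss n ^ 2 + b3 * ss n ^ 3)))
    = (\<lambda>n. f n + h n - ((a0+b0) + (a1+b1) * ss n + (a2+b2) * ss n ^ 2 + (a3+b3) * ss n ^ 3))"
    by (rule ext) (simp add: algebra_simps)
  ultimately show ?thesis unfolding expn_def by simp
qed

lemma expn_cmult:
  assumes "expn f a0 a1 a2 a3"
  shows "expn (\<lambda>n. c * f n) (c*a0) (c*a1) (c*a2) (c*a3)"
proof -
  have "(\<lambda>n. c * (f n - (a0 + a1 * ss n + a2 * ss n ^ 2 + a3 * ss n ^ 3))) \<in> O(\<lambda>n. ss n ^ 4)"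
    using assms unfolding expn_def by (cases "c = 0") auto
  then show ?thesis unfolding expn_def by (simp add: algebra_simps)
qed

lemma expn_poly: "expn (\<lambda>n. a + b * ss n + c * ss n ^ 2 + d * ss n ^ 3) a b c d"
  unfolding expn_def by simp

lemma expn_const: "expn (\<lambda>n. a) a 0 0 0"
  using expn_poly[of a 0 0 0] by simp

lemma expn_ss_mult:
  assumes "expn f a0 a1 a2 a3"
  shows "expn (\<lambda>n. ss n * f n) 0 a0 a1 a2"
proof -
  have "expn (\<lambda>n. ss n * f n) (0*a0) (0*a1+1*a0) (0*a2+1*a1+0*a0) (0*a3+1*a2+0*a1+0*a0)"
    using expn_mult[OF expn_poly[of 0 1 0 0] assms] by simp
  then show ?thesis by simp
qed

lemma expn_small:
  assumes "f \<in> O(\<lambda>n. ss n ^ 4)" shows "expn f 0 0 0 0"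
  using assms unfolding expn_def by simp

lemma ss_shift_ev: "eventually (\<lambda>n. ss (n - 1) = 1 / sqrt (real n - 1)) at_top"
  by (intro eventually_at_top_linorderI[of 1]) (auto simp: ss_def of_nat_diff)

lemma ss_shift_ev2: "eventually (\<lambda>n. ss (n - 1) = 1 / sqrt (real n - 1) \<and> ss n = 1 / sqrt (real n)) at_top"
  by (intro eventually_at_top_linorderI[of 1]) (auto simp: ss_def of_nat_diff)

lemma R4a: "(\<lambda>n. 1 / sqrt (real n - 1) - (1/sqrt n + (1/sqrt n)^3/2)) \<in> O(\<lambda>n. (1/sqrt n)^4)"
  by real_asymp
lemma R4b: "(\<lambda>n. (1 / sqrt (real n - 1))^2 - (1/sqrt n)^2) \<in> O(\<lambda>n. (1/sqrt n)^4)"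
  by real_asymp
lemma R4c: "(\<lambda>n. (1 / sqrt (real n - 1))^3 - (1/sqrt n)^3) \<in> O(\<lambda>n. (1/sqrt n)^4)"
  by real_asymp
lemma R4d: "(\<lambda>n. (1 / sqrt (real n - 1))^4) \<in> O(\<lambda>n. (1/sqrt n)^4)"
  by real_asymp

lemma expn_shift:
  assumes "expn f a b c d"
  shows "expn (\<lambda>n. f (n - 1)) a b c (d + b/2)"
proof -
  have ssd: "(\<lambda>n. ss n ^ k) = (\<lambda>n. (1 / sqrt (real n)) ^ k)" for k by (auto simp: ss_def)
  define E where "E n = f n - (a + b * ss n + c * ss n ^ 2 + d * ss n ^ 3)" for n
  have E: "E \<in> O(\<lambda>n. ss n ^ 4)" using assms unfolding expn_def E_def by simp
  have E1: "(\<lambda>n. E (n - 1)) \<in> O(\<lambda>n. ss (n - 1) ^ 4)"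
    using landau_o.big.compose[OF E filterlim_minus_const_nat_at_top[of 1]] by simp
  have s4: "(\<lambda>n. ss (n - 1) ^ 4) \<in> O(\<lambda>n. ss n ^ 4)"
    unfolding ssd using R4d
    by (subst landau_o.big.in_cong[where g="\<lambda>n. (1 / sqrt (real n - 1))^4"]) 
       (auto intro: eventually_mono[OF ss_shift_ev2])
  have s1: "(\<lambda>n. ss (n - 1) - (ss n + ss n ^ 3 / 2)) \<in> O(\<lambda>n. ss n ^ 4)"
    unfolding ssd using R4a
    by (subst landau_o.big.in_cong[where g="\<lambda>n. 1 / sqrt (real n - 1) - (1/sqrt n + (1/sqrt n)^3/2)"]) 
       (auto intro: eventually_mono[OF ss_shift_ev2])
  have s2: "(\<lambda>n. ss (n - 1) ^ 2 - ss n ^ 2) \<in> O(\<lambda>n. ss n ^ 4)"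
    unfolding ssd using R4b
    by (subst landau_o.big.in_cong[where g="\<lambda>n. (1 / sqrt (real n - 1))^2 - (1/sqrt n)^2"]) 
       (auto intro: eventually_mono[OF ss_shift_ev2])
  have s3: "(\<lambda>n. ss (n - 1) ^ 3 - ss n ^ 3) \<in> O(\<lambda>n. ss n ^ 4)"
    unfolding ssd using R4c
    by (subst landau_o.big.in_cong[where g="\<lambda>n. (1 / sqrt (real n - 1))^3 - (1/sqrt n)^3"]) 
       (auto intro: eventually_mono[OF ss_shift_ev2])
  have eq: "(\<lambda>n. f (n - 1) - (a + b * ss n + c * ss n ^ 2 + (d + b/2) * ss n ^ 3))
     = (\<lambda>n. E (n - 1) + b * (ss (n - 1) - (ss n + ss n ^ 3 / 2)) + c * (ss (n - 1) ^ 2 - ss n ^ 2)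
            + d * (ss (n - 1) ^ 3 - ss n ^ 3))"
    by (rule ext) (simp add: E_def algebra_simps)
  show ?thesis unfolding expn_def eq
    by (intro sum_in_bigo(1) landau_o.big_trans[OF E1 s4]) (use s1 s2 s3 in simp_all)
qed


fun invol :: "nat \<Rightarrow> nat" where
  "invol 0 = 1" | "invol (Suc 0) = 1" | "invol (Suc (Suc n)) = invol (Suc n) + Suc n * invol n"

lemma invol_pos: "invol n > 0" by (induction n rule: invol.induct) auto

definition rr :: "nat \<Rightarrow> real" where "rr n = invol (n - 1) / invol n"

lemma rr_pos: "rr n > 0" using invol_pos[of n] invol_pos[of "n-1"] by (simp add: rr_def)

lemma rr_rec: assumes "n \<ge> 2" shows "rr n * (1 + (real n - 1) * rr (n - 1)) = 1"
proof -
  obtain m where m: "n = Suc (Suc m)" using assms by (metis add_2_eq_Suc le_Suc_ex)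
  have a: "real (invol n) = invol (Suc m) + (Suc m) * invol m" using m by simp
  have p1: "real (invol m) > 0" "real (invol (Suc m)) > 0" using invol_pos by auto
  have b: "rr n = invol (Suc m) / (invol (Suc m) + (Suc m) * invol m)" using m a by (simp add: rr_def)
  have c: "rr (n - 1) = invol m / invol (Suc m)" using m by (simp add: rr_def)
  have d: "real n - 1 = Suc m" using m by simp
  have pos: "real (invol (Suc m)) + (Suc m) * invol m > 0" using p1 by (simp add: add_pos_nonneg)
  have e: "1 + real (Suc m) * (invol m / invol (Suc m)) = (invol (Suc m) + (Suc m) * invol m) / invol (Suc m)"
    using p1 by (simp add: field_simps)
  show ?thesis unfolding b c d e using p1 pos by simp
qed

lemma rr_upper: "n \<ge> 1 \<Longrightarrow> real n * rr n \<le> sqrt n"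
proof (induction n rule: less_induct)
  case (less n)
  show ?case
  proof (cases "n \<le> 2")
    case True
    then have "n = 1 \<or> n = 2" using less.prems by auto
    then show ?thesis
    proof
      assume "n = 1" then show ?thesis by (simp add: rr_def)
    next
      assume n2: "n = 2"
      have "sqrt 1 \<le> sqrt (2::real)" by (rule real_sqrt_le_mono) simp
      then show ?thesis using n2 by (simp add: rr_def numeral_2_eq_2)
    qed
  next
    case False
    then have n3: "n \<ge> 3" by simp
    define x where "x = real (n - 2) * rr (n - 2)"
    have x0: "0 \<le> x" using rr_pos[of "n-2"] by (simp add: x_def)
    have "x \<le> sqrt (real (n - 2))" unfolding x_def using less.IH[of "n-2"] n3 by simp
    also have "\<dots> \<le> sqrt (real n)" by (rule real_sqrt_le_mono) simp
    finally have xle: "x \<le> sqrt n" .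
    have r1: "rr (n - 1) * (1 + x) = 1"
      using rr_rec[of "n-1"] n3 unfolding x_def by (simp add: of_nat_diff algebra_simps numeral_2_eq_2)
    have r2: "rr n * (1 + (real n - 1) * rr (n - 1)) = 1" using rr_rec[of n] n3 by simp
    have "rr (n-1) = 1 / (1 + x)" using r1 x0 by (simp add: field_simps)
    with r2 have "rr n * (1 + (real n - 1) / (1 + x)) = 1" by simp
    moreover have "1 + (real n - 1) / (1 + x) = (n + x) / (1 + x)" using x0 by (simp add: field_simps)
    ultimately have "rr n * ((n + x) / (1 + x)) = 1" by metis
    then have "rr n * (n + x) = 1 + x" using x0 by (simp add: field_simps)
    then have rn: "rr n = (1 + x) / (n + x)" using x0 n3 by (simp add: eq_divide_eq)
    define y where "y = sqrt (real n)"
    have y1: "1 \<le> y" using n3 by (simp add: y_def)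
    have yy: "y * y = n" by (simp add: y_def)
    have key: "0 \<le> y * (y - 1) * (y - x)" using y1 xle by (simp add: y_def)
    have "real n * (1 + x) \<le> y * (real n + x)"
      using key yy by (simp add: algebra_simps)  
    then have "real n * (1 + x) / (real n + x) \<le> y" using x0 n3 by (simp add: divide_le_eq)
    then show ?thesis using rn by (simp add: y_def)
  qed
qed


lemma rec_bound:
  fixes E :: "nat \<Rightarrow> real"
  assumes rec: "\<And>n. n > N \<Longrightarrow> E n \<le> (1 - c / sqrt n) * E (n - 1) + C / sqrt n"
    and nn: "\<And>n. n > N \<Longrightarrow> 0 \<le> 1 - c / sqrt n" and c: "c > 0"
  shows "n \<ge> N \<Longrightarrow> E n \<le> max (E N) (C / c)"
proof (induction n rule: dec_induct)
  case base then show ?case by simp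
next
  case (step n)
  define M where "M = max (E N) (C / c)"
  have IH: "E n \<le> M" using step.IH by (simp add: M_def)
  have "c * (C / c) \<le> c * M" by (intro mult_left_mono) (use c in \<open>auto simp: M_def\<close>)
  then have cM: "C \<le> c * M" using c by simp
  have "E (Suc n) \<le> (1 - c / sqrt (Suc n)) * E n + C / sqrt (Suc n)"
    using rec[of "Suc n"] step.hyps by simp
  also have "\<dots> \<le> (1 - c / sqrt (Suc n)) * M + C / sqrt (Suc n)"
    using nn[of "Suc n"] step.hyps IH by (intro add_right_mono mult_left_mono) auto
  also have "\<dots> = M - (c * M - C) / sqrt (Suc n)" by (simp add: field_simps)
  also have "\<dots> \<le> M" using cM by simp
  finally show ?case by (simp add: M_def)
qed

definition gg :: "nat \<Rightarrow> real" where
 "gg n = (1/sqrt n) * (1 - 1/(2*sqrt n) + 3/(8*n) - 1/(8*n*sqrt n) - 1/(128*n^2))"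

lemma R1: "(\<lambda>n. gg n * (1 + (real n - 1) * gg (n-1)) - 1) \<in> O(\<lambda>n. 1 / (real n * real n * sqrt n))"
proof -
  have ev: "\<forall>\<^sub>F n in at_top. real (n - 1) = real n - 1" by (intro eventually_at_top_linorderI[of 1]) auto
  show ?thesis unfolding gg_def
    apply (subst landau_o.big.in_cong[where g="\<lambda>n. (1/sqrt n) * (1 - 1/(2*sqrt n) + 3/(8*n) - 1/(8*n*sqrt n) - 1/(128*n^2)) * (1 + (real n - 1) *  ((1/sqrt (real n - 1)) * (1 - 1/(2*sqrt (real n - 1)) + 3/(8*(real n - 1)) - 1/(8*(real n - 1)*sqrt (real n - 1)) - 1/(128*(real n - 1)^2)))) - 1"])
    apply (auto intro: eventually_mono[OF ev])[1]
    by real_asymp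
qed

lemma R2: "\<forall>\<^sub>F n in at_top. (real n - 1) * (1/sqrt n) * gg n \<le> 1 - 1/(4 * sqrt n) \<and> 0 \<le> gg n"
  unfolding gg_def by (intro eventually_conj; real_asymp)

lemma R3: "\<forall>\<^sub>F n in at_top. (1 - 1/(4 * sqrt n)) * ((real n)^2 * sqrt n / ((real n - 1)^2 * sqrt (real n - 1))) \<le> 1 - 1/(8 * sqrt n)
   \<and> 0 \<le> 1 - (1/8) / sqrt n"
  by (intro eventually_conj; real_asymp)

lemma resc: fixes B X W V :: real assumes "V \<noteq> 0" shows "B * X * W = B * (W / V) * (X * V)"
  using assms by (simp add: field_simps)

lemma err_bound: "(\<lambda>n. rr n - gg n) \<in> O(\<lambda>n. 1 / (real n * real n * sqrt n))"
proof -
  define e where "e n = rr n - gg n" for n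
  define dl where "dl n = gg n * (1 + (real n - 1) * gg (n-1)) - 1" for n
  obtain C1 where C1: "C1 > 0" and ev1: "\<forall>\<^sub>F n in at_top. norm (dl n) \<le> C1 * norm (1 / (real n * real n * sqrt n))"
    using R1 unfolding dl_def by (elim landau_o.bigE) auto
  have ev: "\<forall>\<^sub>F n in at_top. norm (dl n) \<le> C1 * norm (1 / (real n * real n * sqrt n)) \<and>
     ((real n - 1) * (1/sqrt n) * gg n \<le> 1 - 1/(4 * sqrt n) \<and> 0 \<le> gg n) \<and>
     ((1 - 1/(4 * sqrt n)) * ((real n)^2 * sqrt n / ((real n - 1)^2 * sqrt (real n - 1))) \<le> 1 - 1/(8 * sqrt n)
      \<and> 0 \<le> 1 - (1/8) / sqrt n) \<and> n \<ge> 3"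
    by (intro eventually_conj ev1 R2 R3 eventually_ge_at_top)
  then obtain N where N: "\<And>n. n \<ge> N \<Longrightarrow> norm (dl n) \<le> C1 * norm (1 / (real n * real n * sqrt n)) \<and>
     ((real n - 1) * (1/sqrt n) * gg n \<le> 1 - 1/(4 * sqrt n) \<and> 0 \<le> gg n) \<and>
     ((1 - 1/(4 * sqrt n)) * ((real n)^2 * sqrt n / ((real n - 1)^2 * sqrt (real n - 1))) \<le> 1 - 1/(8 * sqrt n)
      \<and> 0 \<le> 1 - (1/8) / sqrt n) \<and> n \<ge> 3"
    unfolding eventually_at_top_linorder by blast
  define E where "E n = \<bar>e n\<bar> * ((real n)^2 * sqrt n)" for n
  have step: "E n \<le> (1 - (1/8) / sqrt n) * E (n - 1) + C1 / sqrt n" if n: "n > N" for n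
  proof -
    from N[of n] n have dlb: "\<bar>dl n\<bar> \<le> C1 / (real n * real n * sqrt n)"
      and g1: "(real n - 1) * (1/sqrt n) * gg n \<le> 1 - 1/(4 * sqrt n)" and g0: "0 \<le> gg n"
      and g3: "(1 - 1/(4 * sqrt n)) * ((real n)^2 * sqrt n / ((real n - 1)^2 * sqrt (real n - 1))) \<le> 1 - 1/(8 * sqrt n)"
      and n3: "n \<ge> 3"
      by auto
    have rec: "rr n * (1 + (real n - 1) * rr (n - 1)) = 1" using rr_rec[of n] n3 by simp
    have ide: "e n = - rr n * (dl n + (real n - 1) * gg n * e (n - 1))"
    proof -
      have rec': "gg n * rr n * (1 + (real n - 1) * rr (n - 1)) = gg n" using rec by (simp add: mult.assoc)
      show ?thesis unfolding e_def dl_def using rec rec' by (simp add: algebra_simps)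
    qed
    have rp: "0 < rr n" by (rule rr_pos)
    have ru: "rr n \<le> 1 / sqrt n"
    proof -
      have h: "sqrt (real n) * sqrt (real n) = real n" by simp
      have sp: "sqrt (real n) > 0" using n3 by simp
      have "rr n * real n \<le> sqrt n" using rr_upper[of n] n3 by (simp add: mult.commute)
      then have "(rr n * sqrt n) * sqrt n \<le> 1 * sqrt n" using h by (simp add: mult.assoc)
      then have "rr n * sqrt n \<le> 1" using sp by (rule mult_right_le_imp_le)
      then show ?thesis using sp by (simp add: le_divide_eq)
    qed
    have "\<bar>e n\<bar> = rr n * \<bar>dl n + (real n - 1) * gg n * e (n - 1)\<bar>"
      using rp by (simp add: ide abs_mult)
    also have "\<dots> \<le> rr n * (\<bar>dl n\<bar> + (real n - 1) * gg n * \<bar>e (n - 1)\<bar>)"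
      using rp g0 n3 by (intro mult_left_mono) (auto simp: abs_mult intro: order.trans[OF abs_triangle_ineq])
    also have "\<dots> \<le> (1 / sqrt n) * (\<bar>dl n\<bar> + (real n - 1) * gg n * \<bar>e (n - 1)\<bar>)"
      using ru g0 n3 by (intro mult_right_mono) auto
    also have "\<dots> = \<bar>dl n\<bar> / sqrt n + ((real n - 1) * (1/sqrt n) * gg n) * \<bar>e (n - 1)\<bar>"
      by (simp add: add_divide_distrib)
    also have "\<dots> \<le> C1 / (real n * real n * sqrt n) / sqrt n + (1 - 1/(4 * sqrt n)) * \<bar>e (n - 1)\<bar>"
      using dlb g1 by (intro add_mono mult_right_mono divide_right_mono) auto
    finally have eb: "\<bar>e n\<bar> \<le> C1 / (real n * real n * sqrt n) / sqrt n + (1 - 1/(4 * sqrt n)) * \<bar>e (n - 1)\<bar>" .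
    have Em1: "E (n - 1) = \<bar>e (n - 1)\<bar> * ((real n - 1)^2 * sqrt (real n - 1))"
      using n3 by (simp add: E_def of_nat_diff)
    have pos1: "(real n - 1)^2 * sqrt (real n - 1) > 0" using n3 by simp
    have "E n \<le> (C1 / (real n * real n * sqrt n) / sqrt n + (1 - 1/(4 * sqrt n)) * \<bar>e (n - 1)\<bar>) * ((real n)^2 * sqrt n)"
      unfolding E_def using eb by (intro mult_right_mono) auto
    also have "\<dots> = C1 / sqrt n + ((1 - 1/(4 * sqrt n)) * ((real n)^2 * sqrt n / ((real n - 1)^2 * sqrt (real n - 1)))) * E (n - 1)"
    proof -
      have sp: "sqrt (real n) > 0" using n3 by simp
      have a1: "C1 / (real n * real n * sqrt n) / sqrt n * ((real n)^2 * sqrt n) = C1 / sqrt n"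
        using sp n3 by (simp add: power2_eq_square)
      have "(1 - 1/(4 * sqrt n)) * \<bar>e (n - 1)\<bar> * ((real n)^2 * sqrt n) =
        ((1 - 1/(4 * sqrt n)) * ((real n)^2 * sqrt n / ((real n - 1)^2 * sqrt (real n - 1)))) *
        (\<bar>e (n - 1)\<bar> * ((real n - 1)^2 * sqrt (real n - 1)))"
        by (rule resc) (use pos1 n3 in simp)
      then show ?thesis unfolding Em1 distrib_right a1 by simp
    qed
    also have "\<dots> \<le> C1 / sqrt n + (1 - 1/(8 * sqrt n)) * E (n - 1)"
      using g3 by (intro add_left_mono mult_right_mono) (auto simp: E_def)
    finally show ?thesis by simp
  qed
  have nn: "0 \<le> 1 - (1/8) / sqrt n" if "n > N" for n using N[of n] that by auto
  have bd: "E n \<le> max (E N) (C1 / (1/8))" if "n \<ge> N" for n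
    by (rule rec_bound[where c="1/8"]) (use step nn that in auto)
  show ?thesis
  proof (rule bigoI[where c="max (E N) (C1 / (1/8))"])
    show "\<forall>\<^sub>F n in at_top. norm (rr n - gg n) \<le> max (E N) (C1 / (1/8)) * norm (1 / (real n * real n * sqrt n))"
    proof (intro eventually_at_top_linorderI[of "max N 1"])
      fix n assume "n \<ge> max N 1"
      then have n1: "n \<ge> 1" and nN: "n \<ge> N" by auto
      have "\<bar>e n\<bar> = E n / ((real n)^2 * sqrt n)" using n1 by (simp add: E_def)
      also have "\<dots> \<le> max (E N) (C1 / (1/8)) / ((real n)^2 * sqrt n)"
        using bd[OF nN] n1 by (intro divide_right_mono) auto
      finally show "norm (rr n - gg n) \<le> max (E N) (C1 / (1/8)) * norm (1 / (real n * real n * sqrt n))"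
        using n1 by (simp add: e_def power2_eq_square divide_simps)
    qed
  qed
qed


lemma rr_expn: "expn (\<lambda>n. rr n * sqrt n) 1 (-1/2) (3/8) (-1/8)"
proof -
  have e1: "(\<lambda>n. (rr n - gg n) * sqrt n) \<in> O(\<lambda>n. 1 / (real n * real n * sqrt n) * sqrt n)"
    by (rule landau_o.big.mult[OF err_bound landau_o.big_refl])
  have ev: "eventually (\<lambda>n. 1 / (real n * real n * sqrt n) * sqrt n = ss n ^ 4) at_top"
    by (intro eventually_at_top_linorderI[of 1]) (auto simp: ss_def power_divide power4_eq_xxxx)
  have e2: "(\<lambda>n. (rr n - gg n) * sqrt n) \<in> O(\<lambda>n. ss n ^ 4)"
    using e1 landau_o.big.cong[OF ev] by simp
  have e3: "(\<lambda>n. (rr n - gg n) * sqrt n + (- 1/128) * ss n ^ 4) \<in> O(\<lambda>n. ss n ^ 4)"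
    by (rule sum_in_bigo(1)[OF e2]) simp
  have ev2: "eventually (\<lambda>n. (rr n - gg n) * sqrt n + (- 1/128) * ss n ^ 4 =
      rr n * sqrt n - (1 + (-1/2) * ss n + (3/8) * ss n ^ 2 + (-1/8) * ss n ^ 3)) at_top"
  proof (intro eventually_at_top_linorderI[of 1])
    fix n :: nat assume n: "n \<ge> 1"
    have sp: "sqrt (real n) > 0" using n by simp
    have q: "sqrt (real n) * sqrt (real n) = real n" by simp
    have "gg n * sqrt n = 1 - (1/2) * ss n + (3/8) * ss n ^ 2 - (1/8) * ss n ^ 3 - (1/128) * ss n ^ 4"
      unfolding gg_def ss_def using sp n
      by (simp add: field_simps power2_eq_square power3_eq_cube power4_eq_xxxx q)
    then show "(rr n - gg n) * sqrt n + (- 1/128) * ss n ^ 4 =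
      rr n * sqrt n - (1 + (-1/2) * ss n + (3/8) * ss n ^ 2 + (-1/8) * ss n ^ 3)"
      by (simp add: algebra_simps)
  qed
  show ?thesis unfolding expn_def using e3 landau_o.big.in_cong[OF ev2] by simp
qed

lemma R5: "(\<lambda>n. sqrt n / sqrt (real n - 1) - (1 + (1/sqrt n)^2/2)) \<in> O(\<lambda>n. (1/sqrt n)^4)"
  by real_asymp

definition ww :: "nat \<Rightarrow> real" where "ww n = sqrt n / sqrt (real (n - 1))"

lemma ww_expn: "expn ww 1 0 (1/2) 0"
proof -
  have ev: "eventually (\<lambda>n. sqrt n / sqrt (real n - 1) - (1 + (1/sqrt n)^2/2) =
     ww n - (1 + 0 * ss n + (1/2) * ss n ^ 2 + 0 * ss n ^ 3)) at_top"
    by (intro eventually_at_top_linorderI[of 1]) (auto simp: ww_def ss_def of_nat_diff)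
  have ssd: "(\<lambda>n. ss n ^ 4) = (\<lambda>n. (1 / sqrt (real n)) ^ 4)" by (auto simp: ss_def)
  show ?thesis unfolding expn_def ssd using R5 landau_o.big.in_cong[OF ev] by simp
qed

lemma ww_pow_expn: "expn (\<lambda>n. ww n ^ m) 1 0 (real m / 2) 0"
proof (induction m)
  case 0 then show ?case using expn_const[of 1] by simp
next
  case (Suc m)
  have e: "(\<lambda>n. ww n ^ Suc m) = (\<lambda>n. ww n ^ m * ww n)" by (simp add: mult.commute)
  from expn_mult[OF Suc.IH ww_expn] show ?case unfolding e
    by (rule expn_coeff_cong) (auto simp: field_simps)
qed

definition rho :: "nat \<Rightarrow> nat \<Rightarrow> real" where "rho m n = invol (n - m) / invol n"

definition a3 :: "real \<Rightarrow> real" where "a3 m = - (7 * m^3 + 6 * m^2 - 7 * m) / 48"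

lemma rho_expn: "expn (\<lambda>n. rho m n * sqrt n ^ m) 1 (- real m / 2) (3 * (real m)^2 / 8) (a3 (real m))"
proof (induction m)
  case 0
  have "rho 0 n = 1" for n using invol_pos[of n] by (simp add: rho_def)
  then show ?case using expn_const[of 1] by (simp add: a3_def)
next
  case (Suc m)
  have sh: "expn (\<lambda>n. rho m (n - 1) * sqrt (real (n - 1)) ^ m) 1 (- real m / 2) (3 * (real m)^2 / 8) (a3 (real m) + (- real m / 2) / 2)"
    using expn_shift[OF Suc.IH] by simp
  note pr = expn_mult[OF expn_mult[OF rr_expn sh] ww_pow_expn]
  have ev: "eventually (\<lambda>n. (rr n * sqrt n) * (rho m (n - 1) * sqrt (real (n - 1)) ^ m) * ww n ^ m
      = rho (Suc m) n * sqrt n ^ Suc m) at_top"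
  proof (intro eventually_at_top_linorderI[of 2])
    fix n :: nat assume n: "n \<ge> 2"
    have p: "sqrt (real (n - 1)) > 0" using n by simp
    have r: "rho (Suc m) n = rr n * rho m (n - 1)"
    proof -
      have d: "n - Suc m = n - 1 - m" by simp
      have "real (invol (n - 1)) \<noteq> 0" using invol_pos[of "n-1"] by simp
      then show ?thesis unfolding rho_def rr_def d by simp
    qed
    have q: "sqrt (real (n - 1)) * ww n = sqrt n" unfolding ww_def using p by simp
    have qm: "sqrt (real (n - 1)) ^ m * ww n ^ m = sqrt n ^ m"
      by (subst power_mult_distrib[symmetric]) (simp only: q)
    have "(rr n * sqrt n) * (rho m (n - 1) * sqrt (real (n - 1)) ^ m) * ww n ^ m
      = rr n * sqrt n * rho m (n - 1) * (sqrt (real (n - 1)) ^ m * ww n ^ m)"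
      by (simp only: mult_ac)
    also have "\<dots> = rho (Suc m) n * sqrt n ^ Suc m"
      unfolding qm r power_Suc by (simp only: mult_ac)
    finally show "(rr n * sqrt n) * (rho m (n - 1) * sqrt (real (n - 1)) ^ m) * ww n ^ m
      = rho (Suc m) n * sqrt n ^ Suc m" .
  qed
  show ?case
    by (rule expn_coeff_cong[OF expn_cong[OF pr ev]]) (simp_all add: a3_def power2_eq_square power3_eq_cube algebra_simps divide_simps)
qed


lemma cancel_aux: fixes x a b c :: real assumes "x \<noteq> 0" shows "a / (x * b) * x / c = a / b / c"
  using assms by (simp add: field_simps)

lemma binom_expn: "expn (\<lambda>n. real ((n - k) choose j) * fact j / real n ^ j) 1 0 (- (real j * real k + real j * (real j - 1) / 2)) 0"
proof (induction j)
  case 0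
  show ?case using expn_const[of 1] by simp
next
  case (Suc j)
  have f2: "expn (\<lambda>n. 1 + 0 * ss n + (- (real k + real j)) * ss n ^ 2 + 0 * ss n ^ 3) 1 0 (- (real k + real j)) 0"
    by (rule expn_poly)
  note pr = expn_mult[OF Suc.IH f2]
  have ev: "eventually (\<lambda>n. real ((n - k) choose j) * fact j / real n ^ j * (1 + 0 * ss n + (- (real k + real j)) * ss n ^ 2 + 0 * ss n ^ 3)
     = real ((n - k) choose Suc j) * fact (Suc j) / real n ^ Suc j) at_top"
  proof (intro eventually_at_top_linorderI[of "k + j + 1"])
    fix n :: nat assume n: "n \<ge> k + j + 1"
    define N where "N = n - k"
    have jN: "Suc j \<le> N" using n by (simp add: N_def)
    have np: "real n > 0" using n by simp
    have s2: "ss n ^ 2 = 1 / real n" using np by (simp add: ss_def power_divide)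
    have a: "fact (Suc j) * real (N choose Suc j) = fact N / fact (N - Suc j)" by (rule fact_binomial[OF jN])
    have b: "fact j * real (N choose j) = fact N / fact (N - j)" by (rule fact_binomial) (use jN in simp)
    have c: "(fact (N - j) :: real) = real (N - j) * fact (N - Suc j)"
      using jN by (metis Suc_diff_le diff_Suc_Suc diff_zero fact_Suc le_SucE minus_nat.diff_0 Suc_diff_Suc less_eq_Suc_le) 
    have d: "1 + 0 * ss n + (- (real k + real j)) * ss n ^ 2 + 0 * ss n ^ 3 = real (N - j) / real n"
      using jN np n unfolding s2 N_def by (simp add: field_simps of_nat_diff)
    have fp: "(fact (N - Suc j) :: real) > 0" by simp
    have "real (N choose j) * fact j / real n ^ j * (real (N - j) / real n)
        = (fact j * real (N choose j)) * real (N - j) / real n ^ Suc j" by (simp add: field_simps)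
    also have "\<dots> = fact N / fact (N - Suc j) / real n ^ Suc j"
      unfolding b c using cancel_aux[of "real (N - j)" "fact N" "fact (N - Suc j)" "real n ^ Suc j"] jN by simp
    also have "\<dots> = real (N choose Suc j) * fact (Suc j) / real n ^ Suc j"
      unfolding a[symmetric] by (simp add: mult.commute)
    finally show "real ((n - k) choose j) * fact j / real n ^ j * (1 + 0 * ss n + (- (real k + real j)) * ss n ^ 2 + 0 * ss n ^ 3)
     = real ((n - k) choose Suc j) * fact (Suc j) / real n ^ Suc j" unfolding d N_def .
  qed
  show ?case
    by (rule expn_coeff_cong[OF expn_cong[OF pr ev]]) (simp_all add: algebra_simps divide_simps)
qed


definition bh :: "nat \<Rightarrow> nat \<Rightarrow> nat" where
  "bh k j = (if j + 2 \<le> k then j + 1 else if j \<le> k then k - 1 else 0)"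

definition TT :: "nat \<Rightarrow> nat \<Rightarrow> nat \<Rightarrow> real" where
  "TT k j n = real (bh k j) * real ((n - k) choose j) * rho (k + j) n"

definition XX :: "nat \<Rightarrow> nat \<Rightarrow> nat \<Rightarrow> real" where
  "XX k j n = (real ((n - k) choose j) * fact j / real n ^ j) * (rho (k + j) n * sqrt n ^ (k + j))"

definition bet :: "nat \<Rightarrow> nat \<Rightarrow> real" where
  "bet k j = - (real j * real k + real j * (real j - 1) / 2)"
definition xa1 :: "nat \<Rightarrow> nat \<Rightarrow> real" where "xa1 k j = - real (k + j) / 2"
definition xa2 :: "nat \<Rightarrow> nat \<Rightarrow> real" where "xa2 k j = 3 * (real (k + j))^2 / 8 + bet k j"
definition xa3 :: "nat \<Rightarrow> nat \<Rightarrow> real" where "xa3 k j = a3 (real (k + j)) + bet k j * xa1 k j"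

lemma XX_expn: "expn (XX k j) 1 (xa1 k j) (xa2 k j) (xa3 k j)"
proof -
  note pr = expn_mult[OF binom_expn[of k j] rho_expn[of "k + j"]]
  have e: "XX k j = (\<lambda>n. (real ((n - k) choose j) * fact j / real n ^ j) * (rho (k + j) n * sqrt n ^ (k + j)))"
    by (auto simp: XX_def)
  show ?thesis unfolding e
    by (rule expn_coeff_cong[OF pr]) (simp_all add: xa1_def xa2_def xa3_def bet_def algebra_simps)
qed

lemma TT_eq:
  assumes "j \<le> k" "n > 0"
  shows "TT k j n = real (bh k j) / fact j * (ss n ^ (k - j) * XX k j n)"
proof -
  have sp: "sqrt (real n) > 0" using assms by simp
  have p1: "sqrt (real n) ^ (k + j) = sqrt (real n) ^ (k - j) * real n ^ j"
  proof -
    have "k + j = (k - j) + 2 * j" using assms by simp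
    then have "sqrt (real n) ^ (k + j) = sqrt (real n) ^ ((k - j) + 2 * j)" by (rule arg_cong)
    also have "\<dots> = sqrt (real n) ^ (k - j) * (sqrt (real n) ^ 2) ^ j"
      by (simp only: power_add power_mult)
    finally show ?thesis by simp
  qed
  have p2: "ss n ^ (k - j) * sqrt (real n) ^ (k - j) = 1"
    using sp by (simp add: ss_def power_divide)
  have fp: "(fact j :: real) > 0" by simp
  have np: "real n ^ j > 0" using assms by simp
  have "real (bh k j) / fact j * (ss n ^ (k - j) * XX k j n)
      = real (bh k j) * real ((n - k) choose j) * rho (k + j) n *
        ((fact j / fact j) * (real n ^ j / real n ^ j) * (ss n ^ (k - j) * sqrt (real n) ^ (k - j)))"
    unfolding XX_def p1 by (simp add: field_simps)
  also have "\<dots> = TT k j n" using fp np p2 by (simp add: TT_def)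
  finally show ?thesis by simp
qed

lemma TT_small:
  assumes "j + 4 \<le> k"
  shows "TT k j \<in> O(\<lambda>n. ss n ^ 4)"
proof -
  have ev: "eventually (\<lambda>n. (real (bh k j) / fact j) * (ss n ^ 4 * (ss n ^ (k - j - 4) * XX k j n)) = TT k j n) at_top"
  proof (intro eventually_at_top_linorderI[of 1])
    fix n :: nat assume "n \<ge> 1"
    then have "TT k j n = real (bh k j) / fact j * (ss n ^ (k - j) * XX k j n)" using assms by (intro TT_eq) auto
    moreover have "ss n ^ (k - j) = ss n ^ 4 * ss n ^ (k - j - 4)"
      using assms by (simp flip: power_add)
    ultimately show "(real (bh k j) / fact j) * (ss n ^ 4 * (ss n ^ (k - j - 4) * XX k j n)) = TT k j n"
      by (simp add: mult_ac)
  qed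
  have b1: "(\<lambda>n. ss n ^ (k - j - 4)) \<in> O(\<lambda>_. 1)"
    by (intro bigoI[where c=1] always_eventually) (simp add: ss_pow_le1 ss_nonneg)
  have b2: "(\<lambda>n. ss n ^ (k - j - 4) * XX k j n) \<in> O(\<lambda>_. 1)"
    using landau_o.big.mult[OF b1 expn_O1[OF XX_expn]] by simp
  have "(\<lambda>n. ss n ^ 4 * (ss n ^ (k - j - 4) * XX k j n)) \<in> O(\<lambda>n. ss n ^ 4)"
    using landau_o.big.mult[OF landau_o.big_refl b2] by simp
  then have "(\<lambda>n. (real (bh k j) / fact j) * (ss n ^ 4 * (ss n ^ (k - j - 4) * XX k j n))) \<in> O(\<lambda>n. ss n ^ 4)"
    by simp
  then show ?thesis using landau_o.big.in_cong[OF ev] by simp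
qed

lemma TT_expn0:
  assumes "k = j"
  shows "expn (TT k j) (real (bh k j) / fact j) (real (bh k j) / fact j * xa1 k j)
     (real (bh k j) / fact j * xa2 k j) (real (bh k j) / fact j * xa3 k j)"
proof -
  have ev: "eventually (\<lambda>n. real (bh k j) / fact j * XX k j n = TT k j n) at_top"
    by (intro eventually_at_top_linorderI[of 1]) (use TT_eq assms in auto)
  show ?thesis using expn_cong[OF expn_cmult[OF XX_expn] ev] by simp
qed

lemma TT_expn1:
  assumes "k = j + 1"
  shows "expn (TT k j) 0 (real (bh k j) / fact j) (real (bh k j) / fact j * xa1 k j)
     (real (bh k j) / fact j * xa2 k j)"
proof -
  have ev: "eventually (\<lambda>n. real (bh k j) / fact j * (ss n * XX k j n) = TT k j n) at_top"
    by (intro eventually_at_top_linorderI[of 1]) (use TT_eq assms in auto)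
  show ?thesis using expn_cong[OF expn_cmult[OF expn_ss_mult[OF XX_expn]] ev] by simp
qed

lemma TT_expn2:
  assumes "k = j + 2"
  shows "expn (TT k j) 0 0 (real (bh k j) / fact j) (real (bh k j) / fact j * xa1 k j)"
proof -
  have ev: "eventually (\<lambda>n. real (bh k j) / fact j * (ss n * (ss n * XX k j n)) = TT k j n) at_top"
    by (intro eventually_at_top_linorderI[of 1]) (use TT_eq assms in \<open>auto simp: power2_eq_square\<close>)
  show ?thesis using expn_cong[OF expn_cmult[OF expn_ss_mult[OF expn_ss_mult[OF XX_expn]]] ev] by simp
qed

lemma TT_expn3:
  assumes "k = j + 3"
  shows "expn (TT k j) 0 0 0 (real (bh k j) / fact j)"
proof -
  have ev: "eventually (\<lambda>n. real (bh k j) / fact j * (ss n * (ss n * (ss n * XX k j n))) = TT k j n) at_top"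
    by (intro eventually_at_top_linorderI[of 1]) (use TT_eq assms in \<open>auto simp: power3_eq_cube\<close>)
  show ?thesis using expn_cong[OF expn_cmult[OF expn_ss_mult[OF expn_ss_mult[OF expn_ss_mult[OF XX_expn]]]] ev] by simp
qed


lemma fct: "(fact (K+3) :: real) = (real K+3)*(real K+2)*(real K+1)*fact K" "(fact (K+2) :: real) = (real K+2)*(real K+1)*fact K"
     "(fact (K+1) :: real) = (real K+1)*fact K"
  by (simp_all add: fact_Suc numeral_3_eq_3 numeral_2_eq_2 algebra_simps)

lemma c1: "real (K + 2) / fact (K + 2) + real (K + 2) / fact (K + 3) * xa1 (K+3) (K + 3) = 0"
proof -
  have nz: "(fact K :: real) \<noteq> 0" "real K + 1 \<noteq> 0" "real K + 2 \<noteq> 0" "real K + 3 \<noteq> 0" by auto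
  show ?thesis unfolding fct xa1_def using nz by (simp add: divide_simps) (simp add: algebra_simps)
qed
lemma c2: "real (K + 2) / fact (K + 1) +
     real (K + 2) / fact (K + 2) * xa1 (K+3) (K + 2) +
     real (K + 2) / fact (K + 3) * xa2 (K+3) (K + 3) = 0"
proof -
  have nz: "(fact K :: real) \<noteq> 0" "real K + 1 \<noteq> 0" "real K + 2 \<noteq> 0" "real K + 3 \<noteq> 0" by auto
  show ?thesis unfolding fct xa1_def xa2_def bet_def using nz by (simp add: divide_simps) (simp add: algebra_simps power2_eq_square)
qed
lemma c3: "real (K + 1) / fact K +
     real (K + 2) / fact (K + 1) * xa1 (K+3) (K + 1) +
     real (K + 2) / fact (K + 2) * xa2 (K+3) (K + 2) +
     real (K + 2) / fact (K + 3) * xa3 (K+3) (K + 3) =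
     (real (K+3) - 4) / (3 * fact K)"
proof -
  have nz: "(fact K :: real) \<noteq> 0" "real K + 1 \<noteq> 0" "real K + 2 \<noteq> 0" "real K + 3 \<noteq> 0" by auto
  show ?thesis unfolding fct xa1_def xa2_def xa3_def a3_def bet_def using nz 
    by (simp add: divide_simps) (simp add: algebra_simps power2_eq_square power3_eq_cube)
qed

lemma main_asy:
  assumes "k \<ge> 3"
  shows "(\<lambda>n. (\<Sum>j\<le>k. TT k j n) - (real (k - 1) / fact k + (real k - 4) / (3 * fact (k - 3)) * ss n ^ 3))
           \<in> O(\<lambda>n. ss n ^ 4)"
proof -
  obtain K where k: "k = K + 3" using assms by (metis add.commute le_Suc_ex)
  have sum: "(\<Sum>j\<le>k. TT k j n) = (\<Sum>j<K. TT k j n) + TT k K n + TT k (K+1) n + TT k (K+2) n + TT k (K+3) n" for n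
  proof -
    have "{..k} = {..<Suc (Suc (Suc (Suc K)))}" unfolding k by auto
    then show ?thesis by (simp add: add_ac numeral_3_eq_3 numeral_2_eq_2)
  qed
  have small: "expn (\<lambda>n. \<Sum>j<K. TT k j n) 0 0 0 0"
    by (rule expn_small, rule big_sum_in_bigo, rule TT_small) (simp add: k)
  have h: "k = K + 3" "k = K + 1 + 2" "k = K + 2 + 1" "k = K + 3" by (simp_all add: k)
  note all = expn_add[OF expn_add[OF expn_add[OF expn_add[OF small TT_expn3[OF h(1)]] TT_expn2[OF h(2)]] TT_expn1[OF h(3)]] TT_expn0[OF h(4)]]
  have b: "bh k K = K + 1" "bh k (K+1) = K + 2" "bh k (K+2) = K + 2" "bh k (K+3) = K + 2"
    by (auto simp: bh_def k)
  have f: "(fact (K+3) :: real) = (K+3)*(K+2)*(K+1)*fact K" "(fact (K+2) :: real) = (K+2)*(K+1)*fact K"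
     "(fact (K+1) :: real) = (K+1)*fact K"
    by (simp_all add: fact_Suc numeral_3_eq_3 numeral_2_eq_2 algebra_simps)
  have nz: "(fact K :: real) \<noteq> 0" "real K + 1 \<noteq> 0" "real K + 2 \<noteq> 0" "real K + 3 \<noteq> 0"
     "1 + real K \<noteq> 0" "2 + real K \<noteq> 0" "3 + real K \<noteq> 0" by auto
  have all2: "expn (\<lambda>n. \<Sum>j\<le>k. TT k j n) (real (k - 1) / fact k) 0 0 ((real k - 4) / (3 * fact (k - 3)))"
    unfolding sum
    apply (rule expn_coeff_cong[OF all])
    apply (simp_all only: b)
    using c1[of K] c2[of K] c3[of K] fct[of K] nz by (simp_all add: k)
  show ?thesis using all2 unfolding expn_def by simp
qed



lemma ferrersD: "ferrers S \<Longrightarrow> (i, j) \<in> S \<Longrightarrow> i' \<le> i \<Longrightarrow> j' \<le> j \<Longrightarrow> (i', j') \<in> S"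
  unfolding ferrers_def by blast

lemma ferrers_finite: "ferrers S \<Longrightarrow> finite S"
  unfolding ferrers_def by blast

lemma ferrersI:
  assumes "finite S" "\<And>i j i' j'. (i, j) \<in> S \<Longrightarrow> i' \<le> i \<Longrightarrow> j' \<le> j \<Longrightarrow> (i', j') \<in> S"
  shows "ferrers S"
  unfolding ferrers_def using assms by blast

lemma ferrers_empty: "ferrers {}" by (rule ferrersI) auto

lemma ferrers_Un: "ferrers A \<Longrightarrow> ferrers B \<Longrightarrow> ferrers (A \<union> B)"
  by (rule ferrersI) (auto dest: ferrers_finite intro: ferrersD)

lemma ferrers_Int: "ferrers A \<Longrightarrow> ferrers B \<Longrightarrow> ferrers (A \<inter> B)"
  by (rule ferrersI) (auto dest: ferrers_finite intro: ferrersD)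

definition addable :: "(nat \<times> nat) set \<Rightarrow> (nat \<times> nat) set" where
  "addable S = {c. c \<notin> S \<and> ferrers (insert c S)}"

definition removable :: "(nat \<times> nat) set \<Rightarrow> (nat \<times> nat) set" where
  "removable S = {d \<in> S. ferrers (S - {d})}"

lemma addable_iff:
  assumes "ferrers S"
  shows "(i, j) \<in> addable S \<longleftrightarrow> (i, j) \<notin> S \<and> (i > 0 \<longrightarrow> (i - 1, j) \<in> S) \<and> (j > 0 \<longrightarrow> (i, j - 1) \<in> S)"
proof
  assume a: "(i, j) \<in> addable S"
  then have f: "ferrers (insert (i, j) S)" and n: "(i, j) \<notin> S" by (auto simp: addable_def)
  have "(i - 1, j) \<in> S" if "i > 0"
    using ferrersD[OF f, of i j "i - 1" j] that by auto
  moreover have "(i, j - 1) \<in> S" if "j > 0"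
    using ferrersD[OF f, of i j i "j - 1"] that by auto
  ultimately show "(i, j) \<notin> S \<and> (i > 0 \<longrightarrow> (i - 1, j) \<in> S) \<and> (j > 0 \<longrightarrow> (i, j - 1) \<in> S)"
    using n by auto
next
  assume a: "(i, j) \<notin> S \<and> (i > 0 \<longrightarrow> (i - 1, j) \<in> S) \<and> (j > 0 \<longrightarrow> (i, j - 1) \<in> S)"
  have "ferrers (insert (i, j) S)"
  proof (rule ferrersI)
    show "finite (insert (i, j) S)" using ferrers_finite[OF assms] by simp
  next
    fix a b a' b' assume ab: "(a, b) \<in> insert (i, j) S" and le: "a' \<le> a" "b' \<le> b"
    show "(a', b') \<in> insert (i, j) S"
    proof (cases "(a, b) \<in> S")
      case True then show ?thesis using ferrersD[OF assms True le] by simp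
    next
      case False
      then have ab': "a = i" "b = j" using ab by auto
      show ?thesis
      proof (cases "a' = i \<and> b' = j")
        case True then show ?thesis by simp
      next
        case False
        then have "a' < i \<or> b' < j" using le ab' by auto
        then show ?thesis
        proof
          assume "a' < i"
          then have "(i - 1, j) \<in> S" using a by auto
          then show ?thesis using ferrersD[OF assms, of "i - 1" j a' b'] \<open>a' < i\<close> le ab' by auto
        next
          assume "b' < j"
          then have "(i, j - 1) \<in> S" using a by auto
          then show ?thesis using ferrersD[OF assms, of i "j - 1" a' b'] \<open>b' < j\<close> le ab' by auto
        qed
      qed
    qed
  qed
  then show "(i, j) \<in> addable S" using a by (simp add: addable_def)
qed

lemma removable_iff:
  assumes "ferrers S"
  shows "(i, j) \<in> removable S \<longleftrightarrow> (i, j) \<in> S \<and> (Suc i, j) \<notin> S \<and> (i, Suc j) \<notin> S"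
proof
  assume a: "(i, j) \<in> removable S"
  then have f: "ferrers (S - {(i, j)})" and n: "(i, j) \<in> S" by (auto simp: removable_def)
  have "(Suc i, j) \<notin> S"
  proof
    assume "(Suc i, j) \<in> S"
    then have "(Suc i, j) \<in> S - {(i, j)}" by simp
    from ferrersD[OF f this, of i j] show False by simp
  qed
  moreover have "(i, Suc j) \<notin> S"
  proof
    assume "(i, Suc j) \<in> S"
    then have "(i, Suc j) \<in> S - {(i, j)}" by simp
    from ferrersD[OF f this, of i j] show False by simp
  qed
  ultimately show "(i, j) \<in> S \<and> (Suc i, j) \<notin> S \<and> (i, Suc j) \<notin> S" using n by simp
next
  assume a: "(i, j) \<in> S \<and> (Suc i, j) \<notin> S \<and> (i, Suc j) \<notin> S"
  have "ferrers (S - {(i, j)})"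
  proof (rule ferrersI)
    show "finite (S - {(i, j)})" using ferrers_finite[OF assms] by simp
  next
    fix a b a' b' assume ab: "(a, b) \<in> S - {(i, j)}" and le: "a' \<le> a" "b' \<le> b"
    have in1: "(a', b') \<in> S" using ferrersD[OF assms _ le] ab by auto
    have "(a', b') \<noteq> (i, j)"
    proof
      assume eq: "(a', b') = (i, j)"
      then have "i \<le> a" "j \<le> b" "(a, b) \<noteq> (i, j)" using le ab by auto
      then have "Suc i \<le> a \<or> Suc j \<le> b" by auto
      then show False
      proof
        assume "Suc i \<le> a" then show False using ferrersD[OF assms _ _ \<open>j \<le> b\<close>, of a "Suc i"] ab a by auto
      next
        assume "Suc j \<le> b" then show False using ferrersD[OF assms _ \<open>i \<le> a\<close>, of b "Suc j"] ab a by auto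
      qed
    qed
    then show "(a', b') \<in> S - {(i, j)}" using in1 by simp
  qed
  then show "(i, j) \<in> removable S" using a by (simp add: removable_def)
qed

lemma finite_removable: "ferrers S \<Longrightarrow> finite (removable S)"
  using ferrers_finite by (auto simp: removable_def)

lemma finite_addable:
  assumes "ferrers S" shows "finite (addable S)"
proof -
  have "addable S \<subseteq> insert (0, 0) ((\<lambda>(i, j). (Suc i, j)) ` S \<union> (\<lambda>(i, j). (i, Suc j)) ` S)"
  proof
    fix c assume c: "c \<in> addable S"
    obtain i j where cij: "c = (i, j)" by (cases c)
    show "c \<in> insert (0, 0) ((\<lambda>(i, j). (Suc i, j)) ` S \<union> (\<lambda>(i, j). (i, Suc j)) ` S)"
    proof (cases "i > 0")
      case True
      then have "(i - 1, j) \<in> S" using c cij addable_iff[OF assms] by auto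
      then have "(Suc (i - 1), j) \<in> (\<lambda>(i, j). (Suc i, j)) ` S" by force
      then show ?thesis using True cij by simp
    next
      case False
      show ?thesis
      proof (cases "j > 0")
        case True
        then have "(i, j - 1) \<in> S" using c cij addable_iff[OF assms] by auto
        then have "(i, Suc (j - 1)) \<in> (\<lambda>(i, j). (i, Suc j)) ` S" by force
        then show ?thesis using True cij by simp
      next
        case False
        then show ?thesis using \<open>\<not> i > 0\<close> cij by simp
      qed
    qed
  qed
  moreover have "finite (insert (0, 0) ((\<lambda>(i, j). (Suc i, j)) ` S \<union> (\<lambda>(i, j). (i, Suc j)) ` S))"
    using ferrers_finite[OF assms] by simp
  ultimately show ?thesis by (rule finite_subset)
qed


definition skew :: "(nat \<times> nat) set \<Rightarrow> nat \<Rightarrow> (nat \<times> nat \<Rightarrow> nat) set" where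
  "skew S m = {T. (\<forall>c\<in>S. T c = 0) \<and> ferrers (S \<union> {c. T c \<noteq> 0}) \<and>
      bij_betw T {c. T c \<noteq> 0} {1..m} \<and>
      (\<forall>i j. T (i, Suc j) \<noteq> 0 \<longrightarrow> T (i, j) < T (i, Suc j)) \<and>
      (\<forall>i j. T (Suc i, j) \<noteq> 0 \<longrightarrow> T (i, j) < T (Suc i, j))}"

lemma SYT_skew: "SYT n = skew {} n"
  unfolding SYT_def skew_def is_syt_def Let_def by auto

definition psi :: "nat \<times> nat \<Rightarrow> (nat \<times> nat \<Rightarrow> nat) \<Rightarrow> (nat \<times> nat \<Rightarrow> nat)" where
  "psi c T = (\<lambda>x. if x = c then 1 else if T x = 0 then 0 else Suc (T x))"

lemma psi_in:
  assumes S: "ferrers S" and c: "c \<in> addable S" and T: "T \<in> skew (insert c S) m"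
  shows "psi c T \<in> skew S (Suc m)"
proof -
  have cS: "c \<notin> S" and fc: "ferrers (insert c S)" using c by (auto simp: addable_def)
  have T0: "\<forall>x\<in>insert c S. T x = 0" and Tf: "ferrers (insert c S \<union> {x. T x \<noteq> 0})"
    and Tb: "bij_betw T {x. T x \<noteq> 0} {1..m}"
    and Tr: "\<forall>i j. T (i, Suc j) \<noteq> 0 \<longrightarrow> T (i, j) < T (i, Suc j)"
    and Tc: "\<forall>i j. T (Suc i, j) \<noteq> 0 \<longrightarrow> T (i, j) < T (Suc i, j)"
    using T by (auto simp: skew_def)
  define U where "U = psi c T"
  have supp: "{x. U x \<noteq> 0} = insert c {x. T x \<noteq> 0}" by (auto simp: U_def psi_def)
  have cT: "T c = 0" using T0 by simp
  have p1: "\<forall>x\<in>S. U x = 0" using T0 cS by (auto simp: U_def psi_def)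
  have p2: "ferrers (S \<union> {x. U x \<noteq> 0})" unfolding supp using Tf by (simp add: insert_commute)
  have p3: "bij_betw U {x. U x \<noteq> 0} {1..Suc m}"
  proof -
    have inj: "inj_on T {x. T x \<noteq> 0}" using Tb by (simp add: bij_betw_def)
    have img: "T ` {x. T x \<noteq> 0} = {1..m}" using Tb by (simp add: bij_betw_def)
    have "inj_on U (insert c {x. T x \<noteq> 0})"
    proof (rule inj_onI)
      fix x y assume x: "x \<in> insert c {x. T x \<noteq> 0}" and y: "y \<in> insert c {x. T x \<noteq> 0}" and e: "U x = U y"
      show "x = y"
        using x y e inj cT unfolding U_def psi_def by (auto split: if_splits dest: inj_onD)
    qed
    moreover have "U ` (insert c {x. T x \<noteq> 0}) = {1..Suc m}"
    proof -
      have "U ` {x. T x \<noteq> 0} = Suc ` (T ` {x. T x \<noteq> 0})"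
        using cT by (auto simp: U_def psi_def image_iff) 
      also have "\<dots> = {2..Suc m}" unfolding img by (simp add: image_Suc_atLeastAtMost)
      moreover have uc: "U c = 1" by (simp add: U_def psi_def)
      ultimately have "U ` insert c {x. T x \<noteq> 0} = insert 1 {2..Suc m}" by (simp only: image_insert)
      also have "\<dots> = {1..Suc m}" by auto
      finally show ?thesis .
    qed
    ultimately show ?thesis unfolding supp by (simp add: bij_betw_def)
  qed
  have p4: "\<forall>i j. U (i, Suc j) \<noteq> 0 \<longrightarrow> U (i, j) < U (i, Suc j)"
  proof (intro allI impI)
    fix i j assume u: "U (i, Suc j) \<noteq> 0"
    show "U (i, j) < U (i, Suc j)"
    proof (cases "(i, Suc j) = c")
      case True
      then have "(i, j) \<in> S" using addable_iff[OF S] c by auto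
      then have "U (i, j) = 0" using p1 by simp
      then show ?thesis using u by simp
    next
      case False
      then have "T (i, Suc j) \<noteq> 0" using u by (auto simp: U_def psi_def split: if_splits)
      then have "T (i, j) < T (i, Suc j)" using Tr by simp
      then show ?thesis using False \<open>T (i, Suc j) \<noteq> 0\<close> by (auto simp: U_def psi_def)
    qed
  qed
  have p5: "\<forall>i j. U (Suc i, j) \<noteq> 0 \<longrightarrow> U (i, j) < U (Suc i, j)"
  proof (intro allI impI)
    fix i j assume u: "U (Suc i, j) \<noteq> 0"
    show "U (i, j) < U (Suc i, j)"
    proof (cases "(Suc i, j) = c")
      case True
      then have "(i, j) \<in> S" using addable_iff[OF S] c by auto
      then have "U (i, j) = 0" using p1 by simp
      then show ?thesis using u by simp
    next
      case False
      then have "T (Suc i, j) \<noteq> 0" using u by (auto simp: U_def psi_def split: if_splits)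
      then have "T (i, j) < T (Suc i, j)" using Tc by simp
      then show ?thesis using False \<open>T (Suc i, j) \<noteq> 0\<close> by (auto simp: U_def psi_def)
    qed
  qed
  show ?thesis unfolding skew_def mem_Collect_eq U_def[symmetric] using p1 p2 p3 p4 p5 by (intro conjI) assumption+
qed

lemma psi_surj:
  assumes S: "ferrers S" and T: "T \<in> skew S (Suc m)"
  shows "\<exists>c. c \<in> addable S \<and> (\<lambda>x. T x - 1) \<in> skew (insert c S) m \<and> T = psi c (\<lambda>x. T x - 1)"
proof -
  have T0: "\<forall>x\<in>S. T x = 0" and Tf: "ferrers (S \<union> {x. T x \<noteq> 0})"
    and Tb: "bij_betw T {x. T x \<noteq> 0} {1..Suc m}"
    and Tr: "\<forall>i j. T (i, Suc j) \<noteq> 0 \<longrightarrow> T (i, j) < T (i, Suc j)"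
    and Tc: "\<forall>i j. T (Suc i, j) \<noteq> 0 \<longrightarrow> T (i, j) < T (Suc i, j)"
    using T by (auto simp: skew_def)
  have inj: "inj_on T {x. T x \<noteq> 0}" using Tb by (simp add: bij_betw_def)
  have img: "T ` {x. T x \<noteq> 0} = {1..Suc m}" using Tb by (simp add: bij_betw_def)
  have "1 \<in> T ` {x. T x \<noteq> 0}" unfolding img by simp
  then obtain c where c1: "T c = 1" by auto
  have uniq: "x = c" if "T x = 1" for x using c1 that by (intro inj_onD[OF inj]) auto
  obtain i j where cij: "c = (i, j)" by (cases c)
  have cS: "c \<notin> S" using T0 c1 by auto
  have ca: "c \<in> addable S"
  proof -
    have "(i - 1, j) \<in> S" if "i > 0"
    proof -
      have "(i - 1, j) \<in> S \<union> {x. T x \<noteq> 0}" using ferrersD[OF Tf, of i j "i - 1" j] c1 cij by auto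
      moreover have "T (i - 1, j) < T (i, j)" using Tc[rule_format, of "i - 1" j] that c1 cij by simp
      ultimately show ?thesis using c1 cij by auto
    qed
    moreover have "(i, j - 1) \<in> S" if "j > 0"
    proof -
      have "(i, j - 1) \<in> S \<union> {x. T x \<noteq> 0}" using ferrersD[OF Tf, of i j i "j - 1"] c1 cij by auto
      moreover have "T (i, j - 1) < T (i, j)" using Tr[rule_format, of i "j - 1"] that c1 cij by simp
      ultimately show ?thesis using c1 cij by auto
    qed
    ultimately show ?thesis using addable_iff[OF S] cS cij by auto
  qed
  define T' where "T' = (\<lambda>x. T x - 1)"
  have one_iff: "T x = 1 \<longleftrightarrow> x = c" for x using uniq c1 by blast
  have supp: "{x. T' x \<noteq> 0} = {x. T x \<noteq> 0} - {c}"
  proof (rule set_eqI)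
    fix x show "x \<in> {x. T' x \<noteq> 0} \<longleftrightarrow> x \<in> {x. T x \<noteq> 0} - {c}"
      using one_iff[of x] by (auto simp: T'_def)
  qed
  have q1: "\<forall>x\<in>insert c S. T' x = 0" using T0 c1 by (auto simp: T'_def)
  have q2: "ferrers (insert c S \<union> {x. T' x \<noteq> 0})"
  proof -
    have "insert c S \<union> {x. T' x \<noteq> 0} = S \<union> {x. T x \<noteq> 0}" unfolding supp using c1 by auto
    then show ?thesis using Tf by simp
  qed
  have q3: "bij_betw T' {x. T' x \<noteq> 0} {1..m}"
  proof -
    have "inj_on T' ({x. T x \<noteq> 0} - {c})"
    proof (rule inj_onI)
      fix x y assume x: "x \<in> {x. T x \<noteq> 0} - {c}" and y: "y \<in> {x. T x \<noteq> 0} - {c}" and e: "T' x = T' y"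
      have "T x \<noteq> 1" "T y \<noteq> 1" using x y one_iff[of x] one_iff[of y] by auto
      then have "T x = T y" using e x y by (simp add: T'_def)
      then show "x = y" by (rule inj_onD[OF inj]) (use x y in auto)
    qed
    moreover have "T' ` ({x. T x \<noteq> 0} - {c}) = {1..m}"
    proof
      show "T' ` ({x. T x \<noteq> 0} - {c}) \<subseteq> {1..m}"
      proof
        fix v assume "v \<in> T' ` ({x. T x \<noteq> 0} - {c})"
        then obtain x where x: "x \<in> {x. T x \<noteq> 0} - {c}" "v = T x - 1" by (auto simp: T'_def)
        have "T x \<in> {1..Suc m}" using img x by auto
        moreover have "T x \<noteq> 1" using one_iff[of x] x by auto
        ultimately show "v \<in> {1..m}" using x by auto
      qed
    next
      show "{1..m} \<subseteq> T' ` ({x. T x \<noteq> 0} - {c})"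
      proof
        fix v assume v: "v \<in> {1..m}"
        then have "Suc v \<in> T ` {x. T x \<noteq> 0}" unfolding img by simp
        then obtain x where x: "T x = Suc v" "T x \<noteq> 0" by auto
        then have "x \<noteq> c" using c1 v by auto
        then show "v \<in> T' ` ({x. T x \<noteq> 0} - {c})" using x by (auto simp: T'_def image_iff intro!: bexI[of _ x])
      qed
    qed
    ultimately show ?thesis unfolding supp by (simp add: bij_betw_def)
  qed
  have q4: "\<forall>i j. T' (i, Suc j) \<noteq> 0 \<longrightarrow> T' (i, j) < T' (i, Suc j)"
  proof (intro allI impI)
    fix i j assume "T' (i, Suc j) \<noteq> 0"
    then have "T (i, Suc j) \<ge> 2" "T (i, Suc j) \<noteq> 0" by (auto simp: T'_def)
    moreover have "T (i, j) < T (i, Suc j)" using Tr calculation by simp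
    ultimately show "T' (i, j) < T' (i, Suc j)" by (simp add: T'_def)
  qed
  have q5: "\<forall>i j. T' (Suc i, j) \<noteq> 0 \<longrightarrow> T' (i, j) < T' (Suc i, j)"
  proof (intro allI impI)
    fix i j assume "T' (Suc i, j) \<noteq> 0"
    then have "T (Suc i, j) \<ge> 2" "T (Suc i, j) \<noteq> 0" by (auto simp: T'_def)
    moreover have "T (i, j) < T (Suc i, j)" using Tc calculation by simp
    ultimately show "T' (i, j) < T' (Suc i, j)" by (simp add: T'_def)
  qed
  have sk: "T' \<in> skew (insert c S) m" unfolding skew_def mem_Collect_eq using q1 q2 q3 q4 q5 by (intro conjI) assumption+
  have eq: "T = psi c T'"
  proof
    fix x show "T x = psi c T' x" using c1 one_iff[of x] by (auto simp: psi_def T'_def)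
  qed
  show ?thesis using ca sk eq unfolding T'_def by (intro exI[of _ c] conjI)
qed


lemma psi_inj:
  assumes c: "c \<in> addable S" and T: "T \<in> skew (insert c S) m"
    and c': "c' \<in> addable S" and T': "T' \<in> skew (insert c' S) m'"
    and e: "psi c T = psi c' T'"
  shows "c = c' \<and> T = T'"
proof -
  have Tc: "T c = 0" using T by (auto simp: skew_def)
  have Tc': "T' c' = 0" using T' by (auto simp: skew_def)
  have "psi c' T' c = 1" using e by (metis psi_def)
  then have cc: "c = c'" by (auto simp: psi_def split: if_splits)
  have "T x = T' x" for x
  proof (cases "x = c")
    case True then show ?thesis using Tc Tc' cc by simp
  next
    case False
    have "psi c T x = psi c' T' x" using e by simp
    then show ?thesis using False cc by (auto simp: psi_def split: if_splits)
  qed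
  then show ?thesis using cc by auto
qed

lemma ferrers_bound:
  assumes F: "ferrers F" and x: "(i, j) \<in> F"
  shows "i < card F" "j < card F"
proof -
  have fin: "finite F" using F by (rule ferrers_finite)
  have "(\<lambda>a. (a, j)) ` {..i} \<subseteq> F" using ferrersD[OF F x] by auto
  then have "card ((\<lambda>a. (a, j)) ` {..i}) \<le> card F" by (rule card_mono[OF fin])
  moreover have "card ((\<lambda>a. (a, j)) ` {..i}) = Suc i" by (subst card_image) (auto simp: inj_on_def)
  ultimately show "i < card F" by simp
  have "(\<lambda>b. (i, b)) ` {..j} \<subseteq> F" using ferrersD[OF F x] by auto
  then have "card ((\<lambda>b. (i, b)) ` {..j}) \<le> card F" by (rule card_mono[OF fin])
  moreover have "card ((\<lambda>b. (i, b)) ` {..j}) = Suc j" by (subst card_image) (auto simp: inj_on_def)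
  ultimately show "j < card F" by simp
qed

lemma finite_skew:
  assumes S: "ferrers S" shows "finite (skew S m)"
proof -
  define N where "N = card S + m"
  define B where "B = {..<N} \<times> {..<N}"
  define Q where "Q = {T :: nat \<times> nat \<Rightarrow> nat. (\<forall>x. x \<notin> B \<longrightarrow> T x = 0) \<and> (\<forall>x. T x \<le> m)}"
  have sub: "skew S m \<subseteq> Q"
  proof
    fix T assume T: "T \<in> skew S m"
    define D where "D = {x. T x \<noteq> 0}"
    have F: "ferrers (S \<union> D)" and bij: "bij_betw T D {1..m}" using T by (auto simp: skew_def D_def)
    have finD: "finite D" using bij_betw_finite[OF bij] by simp
    have cD: "card D = m" using bij_betw_same_card[OF bij] by simp
    have cF: "card (S \<union> D) \<le> N" using card_Un_le[of S D] cD by (simp add: N_def)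
    have out: "T x = 0" if "x \<notin> B" for x
    proof (rule ccontr)
      assume "T x \<noteq> 0"
      then have xF: "x \<in> S \<union> D" by (simp add: D_def)
      obtain i j where x: "x = (i, j)" by (cases x)
      have "i < card (S \<union> D)" "j < card (S \<union> D)" using ferrers_bound[OF F] xF x by auto
      then have "x \<in> B" using cF x by (auto simp: B_def)
      then show False using that by simp
    qed
    have le: "T x \<le> m" for x
    proof (cases "T x = 0")
      case False
      then have "T x \<in> {1..m}" using bij by (auto simp: bij_betw_def D_def)
      then show ?thesis by simp
    qed simp
    show "T \<in> Q" using out le by (simp add: Q_def)
  qed
  have "finite Q"
  proof -
    have inj: "inj_on (\<lambda>T. restrict T B) Q"
    proof (rule inj_onI)
      fix T1 T2 assume T1: "T1 \<in> Q" and T2: "T2 \<in> Q" and e: "restrict T1 B = restrict T2 B"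
      show "T1 = T2"
      proof
        fix x show "T1 x = T2 x"
        proof (cases "x \<in> B")
          case True then show ?thesis using fun_cong[OF e, of x] by simp
        next
          case False then show ?thesis using T1 T2 unfolding Q_def mem_Collect_eq by metis
        qed
      qed
    qed
    have "(\<lambda>T. restrict T B) ` Q \<subseteq> PiE B (\<lambda>_. {..m})" by (auto simp: Q_def)
    moreover have "finite (PiE B (\<lambda>_. {..m}))" by (rule finite_PiE) (auto simp: B_def)
    ultimately have "finite ((\<lambda>T. restrict T B) ` Q)" by (rule finite_subset)
    then show ?thesis using inj by (rule finite_imageD)
  qed
  then show ?thesis using sub by (rule finite_subset[rotated])
qed

lemma card_skew_Suc:
  assumes S: "ferrers S"
  shows "card {T \<in> skew S (Suc m). P T} = (\<Sum>c\<in>addable S. card {T \<in> skew (insert c S) m. P (psi c T)})"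
proof -
  define Sg where "Sg = (SIGMA c:addable S. {T \<in> skew (insert c S) m. P (psi c T)})"
  have eq: "{T \<in> skew S (Suc m). P T} = (\<lambda>(c, T). psi c T) ` Sg"
  proof
    show "(\<lambda>(c, T). psi c T) ` Sg \<subseteq> {T \<in> skew S (Suc m). P T}"
      using psi_in[OF S] by (auto simp: Sg_def)
  next
    show "{T \<in> skew S (Suc m). P T} \<subseteq> (\<lambda>(c, T). psi c T) ` Sg"
    proof
      fix T assume T: "T \<in> {T \<in> skew S (Suc m). P T}"
      then obtain c where c: "c \<in> addable S" "(\<lambda>x. T x - 1) \<in> skew (insert c S) m" "T = psi c (\<lambda>x. T x - 1)"
        using psi_surj[OF S] by blast
      then have "(c, (\<lambda>x. T x - 1)) \<in> Sg" using T by (auto simp: Sg_def)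
      then show "T \<in> (\<lambda>(c, T). psi c T) ` Sg" using c(3) by (auto simp: image_iff intro!: bexI[of _ "(c, (\<lambda>x. T x - 1))"])
    qed
  qed
  have inj: "inj_on (\<lambda>(c, T). psi c T) Sg"
  proof (rule inj_onI)
    fix p q assume p: "p \<in> Sg" and q: "q \<in> Sg" and e: "(\<lambda>(c, T). psi c T) p = (\<lambda>(c, T). psi c T) q"
    obtain c T where pc: "p = (c, T)" by (cases p)
    obtain c' T' where qc: "q = (c', T')" by (cases q)
    show "p = q" using psi_inj[of c S T m c' T' m] p q e pc qc by (auto simp: Sg_def)
  qed
  have fin: "finite {T \<in> skew (insert c S) m. P (psi c T)}" if "c \<in> addable S" for c
  proof -
    have "ferrers (insert c S)" using that by (simp add: addable_def)
    then show ?thesis using finite_skew by simp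
  qed
  have "card {T \<in> skew S (Suc m). P T} = card Sg" unfolding eq by (rule card_image[OF inj])
  also have "\<dots> = (\<Sum>c\<in>addable S. card {T \<in> skew (insert c S) m. P (psi c T)})"
    unfolding Sg_def by (rule card_SigmaI[OF finite_addable[OF S]]) (use fin in auto)
  finally show ?thesis .
qed

fun Acnt :: "nat \<Rightarrow> (nat \<times> nat) set \<Rightarrow> nat" where
  "Acnt 0 S = 1"
| "Acnt (Suc m) S = (\<Sum>c\<in>addable S. Acnt m (insert c S))"

lemma skew_0: "skew S 0 = {\<lambda>_. 0}" if "ferrers S"
proof
  show "skew S 0 \<subseteq> {\<lambda>_. 0}"
  proof
    fix T assume "T \<in> skew S 0"
    then have "bij_betw T {x. T x \<noteq> 0} {}" by (simp add: skew_def)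
    then have "{x. T x \<noteq> 0} = {}" by (simp add: bij_betw_def)
    then show "T \<in> {\<lambda>_. 0}" by auto
  qed
  show "{\<lambda>_. 0} \<subseteq> skew S 0" using that by (simp add: skew_def bij_betw_def)
qed

lemma card_skew: "ferrers S \<Longrightarrow> card (skew S m) = Acnt m S"
proof (induction m arbitrary: S)
  case 0 then show ?case by (simp add: skew_0)
next
  case (Suc m)
  have "card (skew S (Suc m)) = card {T \<in> skew S (Suc m). True}" by simp
  also have "\<dots> = (\<Sum>c\<in>addable S. card {T \<in> skew (insert c S) m. True})"
    by (rule card_skew_Suc[OF Suc.prems])
  also have "\<dots> = (\<Sum>c\<in>addable S. Acnt m (insert c S))"
    by (rule sum.cong) (auto simp: addable_def intro: Suc.IH)
  finally show ?case by simp
qed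


fun Bcnt :: "nat \<Rightarrow> (nat \<times> nat) set \<Rightarrow> nat" where
  "Bcnt 0 S = 1"
| "Bcnt (Suc j) S = (\<Sum>d\<in>removable S. Bcnt j (S - {d}))"

lemma downset_nat:
  assumes "finite A" "\<And>j j'. j \<in> A \<Longrightarrow> j' \<le> j \<Longrightarrow> j' \<in> A"
  shows "j \<in> A \<longleftrightarrow> j < card A"
proof
  assume j: "j \<in> A"
  have "{..j} \<subseteq> A" using assms(2)[OF j] by auto
  from card_mono[OF assms(1) this] show "j < card A" by simp
next
  assume j: "j < card A"
  show "j \<in> A"
  proof (rule ccontr)
    assume "j \<notin> A"
    then have "A \<subseteq> {..<j}" using assms(2) by (metis lessThan_iff not_le subsetI)
    from card_mono[OF _ this] have "card A \<le> j" by simp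
    then show False using j by simp
  qed
qed

definition rowlen :: "(nat \<times> nat) set \<Rightarrow> nat \<Rightarrow> nat" where
  "rowlen S i = card {j. (i, j) \<in> S}"

lemma row_iff:
  assumes S: "ferrers S" shows "(i, j) \<in> S \<longleftrightarrow> j < rowlen S i"
proof -
  have fin: "finite {j. (i, j) \<in> S}"
  proof -
    have "{j. (i, j) \<in> S} = (\<lambda>j. (i, j)) -` S" by auto
    moreover have "finite ((\<lambda>j. (i, j)) -` S)"
      by (rule finite_vimageI) (use ferrers_finite[OF S] in \<open>auto simp: inj_on_def\<close>)
    ultimately show ?thesis by simp
  qed
  have "j \<in> {j. (i, j) \<in> S} \<longleftrightarrow> j < card {j. (i, j) \<in> S}"
    by (rule downset_nat[OF fin]) (auto intro: ferrersD[OF S])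
  then show ?thesis by (simp add: rowlen_def)
qed

lemma rowlen_mono:
  assumes S: "ferrers S" shows "rowlen S (Suc i) \<le> rowlen S i"
proof (rule ccontr)
  assume "\<not> ?thesis"
  then have "(Suc i, rowlen S i) \<in> S" using row_iff[OF S] by simp
  then have "(i, rowlen S i) \<in> S" by (rule ferrersD[OF S]) auto
  then show False using row_iff[OF S] by simp
qed

lemma addable_row:
  assumes S: "ferrers S"
  shows "(i, j) \<in> addable S \<longleftrightarrow> j = rowlen S i \<and> (i = 0 \<or> rowlen S i < rowlen S (i - 1))"
  unfolding addable_iff[OF S] row_iff[OF S] by auto

lemma removable_row:
  assumes S: "ferrers S"
  shows "(i, j) \<in> removable S \<longleftrightarrow> Suc j = rowlen S i \<and> rowlen S (Suc i) \<le> j"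
  unfolding removable_iff[OF S] row_iff[OF S] by auto

lemma card_addable:
  assumes S: "ferrers S" shows "card (addable S) = Suc (card (removable S))"
proof -
  define R where "R = {i. rowlen S (Suc i) < rowlen S i}"
  have finR: "finite R"
  proof -
    have "R \<subseteq> fst ` S"
    proof
      fix i assume "i \<in> R"
      then have "0 < rowlen S i" by (simp add: R_def)
      then have "(i, 0) \<in> S" using row_iff[OF S] by simp
      then show "i \<in> fst ` S" by force
    qed
    then show ?thesis using ferrers_finite[OF S] finite_subset by blast
  qed
  have A: "addable S = (\<lambda>i. (i, rowlen S i)) ` insert 0 (Suc ` R)"
  proof (rule set_eqI)
    fix x obtain i j :: nat where x: "x = (i, j)" by (cases x)
    show "x \<in> addable S \<longleftrightarrow> x \<in> (\<lambda>i. (i, rowlen S i)) ` insert 0 (Suc ` R)"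
      unfolding x addable_row[OF S] by (cases i) (auto simp: R_def)
  qed
  have B: "removable S = (\<lambda>i. (i, rowlen S i - 1)) ` R"
  proof (rule set_eqI)
    fix x obtain i j :: nat where x: "x = (i, j)" by (cases x)
    show "x \<in> removable S \<longleftrightarrow> x \<in> (\<lambda>i. (i, rowlen S i - 1)) ` R"
      unfolding x removable_row[OF S] by (auto simp: R_def)
  qed
  have "card (addable S) = card (insert 0 (Suc ` R))"
    unfolding A by (rule card_image) (auto simp: inj_on_def)
  also have "\<dots> = Suc (card R)" using finR by (simp add: card_image)
  also have "card R = card (removable S)"
    unfolding B by (rule card_image[symmetric]) (auto simp: inj_on_def)
  finally show ?thesis .
qed

lemma swap_pairs:
  assumes S: "ferrers S"
  shows "(c, d) \<in> (SIGMA c:addable S. removable (insert c S) - {c}) \<longleftrightarrow>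
         (d, c) \<in> (SIGMA d:removable S. addable (S - {d}) - {d})"
proof
  assume "(c, d) \<in> (SIGMA c:addable S. removable (insert c S) - {c})"
  then have c: "c \<notin> S" "ferrers (insert c S)" and d: "d \<in> insert c S" "ferrers (insert c S - {d})" and cd: "d \<noteq> c"
    by (auto simp: addable_def removable_def)
  have dS: "d \<in> S" using d cd by auto
  have "S - {d} = S \<inter> (insert c S - {d})" using c by auto
  then have f1: "ferrers (S - {d})" using ferrers_Int[OF S d(2)] by simp
  have "insert c (S - {d}) = insert c S - {d}" using cd by auto
  then show "(d, c) \<in> (SIGMA d:removable S. addable (S - {d}) - {d})"
    using dS f1 c d cd by (auto simp: addable_def removable_def)
next
  assume "(d, c) \<in> (SIGMA d:removable S. addable (S - {d}) - {d})"
  then have d: "d \<in> S" "ferrers (S - {d})" and c: "c \<notin> S - {d}" "ferrers (insert c (S - {d}))" and cd: "c \<noteq> d"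
    by (auto simp: addable_def removable_def)
  have cS: "c \<notin> S" using c cd by auto
  have "insert c S = insert c (S - {d}) \<union> S" by auto
  then have f1: "ferrers (insert c S)" using ferrers_Un[OF c(2) S] by simp
  have "insert c S - {d} = insert c (S - {d})" using cd by auto
  then show "(c, d) \<in> (SIGMA c:addable S. removable (insert c S) - {c})"
    using cS f1 d c cd by (auto simp: addable_def removable_def)
qed

lemma B_add:
  "ferrers S \<Longrightarrow> (\<Sum>c\<in>addable S. Bcnt j (insert c S)) = Bcnt (Suc j) S + Bcnt j S + j * Bcnt (j - 1) S"
proof (induction j arbitrary: S)
  case 0
  then show ?case using card_addable[OF 0] by simp
next
  case (Suc j)
  note S = Suc.prems
  define X where "X = (\<Sum>c\<in>addable S. \<Sum>d\<in>removable (insert c S) - {c}. Bcnt j (insert c S - {d}))"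
  define Y where "Y = (\<Sum>d\<in>removable S. \<Sum>c\<in>addable (S - {d}) - {d}. Bcnt j (insert c (S - {d})))"
  have finA: "finite (addable S)" by (rule finite_addable[OF S])
  have finR: "finite (removable S)" by (rule finite_removable[OF S])
  have l1: "(\<Sum>d\<in>removable (insert c S). Bcnt j (insert c S - {d}))
        = Bcnt j S + (\<Sum>d\<in>removable (insert c S) - {c}. Bcnt j (insert c S - {d}))" if c: "c \<in> addable S" for c
  proof -
    have cS: "c \<notin> S" and fc: "ferrers (insert c S)" using c by (auto simp: addable_def)
    have "c \<in> removable (insert c S)" using cS S by (simp add: removable_def)
    moreover have "insert c S - {c} = S" using cS by auto
    ultimately show ?thesis
      using sum.remove[OF finite_removable[OF fc], of c "\<lambda>d. Bcnt j (insert c S - {d})"] by simp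
  qed
  have LHS: "(\<Sum>c\<in>addable S. Bcnt (Suc j) (insert c S)) = card (addable S) * Bcnt j S + X"
    unfolding X_def using l1 by (simp add: sum.distrib)
  have l2: "(\<Sum>c\<in>addable (S - {d}). Bcnt j (insert c (S - {d})))
        = Bcnt j S + (\<Sum>c\<in>addable (S - {d}) - {d}. Bcnt j (insert c (S - {d})))" if d: "d \<in> removable S" for d
  proof -
    have dS: "d \<in> S" and fd: "ferrers (S - {d})" using d by (auto simp: removable_def)
    have "insert d (S - {d}) = S" using dS by auto
    then have "d \<in> addable (S - {d})" using S by (simp add: addable_def)
    then show ?thesis
      using sum.remove[OF finite_addable[OF fd], of d "\<lambda>c. Bcnt j (insert c (S - {d}))"] \<open>insert d (S - {d}) = S\<close> by simp
  qed
  have l3: "(\<Sum>c\<in>addable (S - {d}). Bcnt j (insert c (S - {d})))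
        = Bcnt (Suc j) (S - {d}) + Bcnt j (S - {d}) + j * Bcnt (j - 1) (S - {d})" if d: "d \<in> removable S" for d
    using d by (intro Suc.IH) (auto simp: removable_def)
  have sumIH: "(\<Sum>d\<in>removable S. Bcnt (Suc j) (S - {d}) + Bcnt j (S - {d}) + j * Bcnt (j - 1) (S - {d}))
      = Bcnt (Suc (Suc j)) S + Bcnt (Suc j) S + j * Bcnt j S"
  proof -
    have "(\<Sum>d\<in>removable S. j * Bcnt (j - 1) (S - {d})) = j * Bcnt j S"
    proof (cases j)
      case 0 then show ?thesis by simp
    next
      case (Suc j') then show ?thesis by (simp add: sum_distrib_left)
    qed
    then show ?thesis by (simp add: sum.distrib)
  qed
  have RHS: "card (removable S) * Bcnt j S + Y = Bcnt (Suc (Suc j)) S + Bcnt (Suc j) S + j * Bcnt j S"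
  proof -
    have "card (removable S) * Bcnt j S + Y = (\<Sum>d\<in>removable S. \<Sum>c\<in>addable (S - {d}). Bcnt j (insert c (S - {d})))"
      unfolding Y_def using l2 by (simp add: sum.distrib)
    also have "\<dots> = (\<Sum>d\<in>removable S. Bcnt (Suc j) (S - {d}) + Bcnt j (S - {d}) + j * Bcnt (j - 1) (S - {d}))"
      by (rule sum.cong) (auto simp: l3)
    finally show ?thesis using sumIH by simp
  qed
  have XY: "X = Y"
  proof -
    have fin1: "finite (removable (insert c S) - {c})" if "c \<in> addable S" for c
      using that finite_removable by (auto simp: addable_def)
    have fin2: "finite (addable (S - {d}) - {d})" if "d \<in> removable S" for d
      using that finite_addable by (auto simp: removable_def)
    have "X = (\<Sum>(c, d)\<in>(SIGMA c:addable S. removable (insert c S) - {c}). Bcnt j (insert c S - {d}))"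
      unfolding X_def by (rule sum.Sigma[OF finA]) (use fin1 in auto)
    also have "(SIGMA c:addable S. removable (insert c S) - {c}) = prod.swap ` (SIGMA d:removable S. addable (S - {d}) - {d})"
    proof (rule set_eqI)
      fix p obtain c d :: "nat \<times> nat" where p: "p = (c, d)" by (cases p)
      show "p \<in> (SIGMA c:addable S. removable (insert c S) - {c}) \<longleftrightarrow> p \<in> prod.swap ` (SIGMA d:removable S. addable (S - {d}) - {d})"
        unfolding p swap_pairs[OF S] by (auto simp: image_iff)
    qed
    also have "(\<Sum>(c, d)\<in>prod.swap ` (SIGMA d:removable S. addable (S - {d}) - {d}). Bcnt j (insert c S - {d}))
        = (\<Sum>(d, c)\<in>(SIGMA d:removable S. addable (S - {d}) - {d}). Bcnt j (insert c S - {d}))"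
      by (subst sum.reindex) (auto simp: case_prod_unfold)
    also have "\<dots> = (\<Sum>(d, c)\<in>(SIGMA d:removable S. addable (S - {d}) - {d}). Bcnt j (insert c (S - {d})))"
    proof (rule sum.cong)
      fix p assume "p \<in> (SIGMA d:removable S. addable (S - {d}) - {d})"
      then obtain d c where p: "p = (d, c)" "c \<noteq> d" by auto
      have "insert c S - {d} = insert c (S - {d})" using p by auto
      then show "(case p of (d, c) \<Rightarrow> Bcnt j (insert c S - {d})) = (case p of (d, c) \<Rightarrow> Bcnt j (insert c (S - {d})))"
        using p by simp
    qed simp
    also have "\<dots> = Y"
      unfolding Y_def by (rule sum.Sigma[OF finR, symmetric]) (use fin2 in auto)
    finally show ?thesis .
  qed
  have "(\<Sum>c\<in>addable S. Bcnt (Suc j) (insert c S)) = Bcnt j S + (card (removable S) * Bcnt j S + Y)"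
    unfolding LHS card_addable[OF S] XY by simp
  also have "\<dots> = Bcnt (Suc (Suc j)) S + Bcnt (Suc j) S + Suc j * Bcnt (Suc j - 1) S"
    unfolding RHS by simp
  finally show ?case .
qed



definition ec :: "nat \<Rightarrow> nat \<Rightarrow> nat" where "ec m j = (m choose j) * invol (m - j)"

lemma ec_zero: "m < j \<Longrightarrow> ec m j = 0" by (simp add: ec_def)

lemma ec_rec0: "ec (Suc m) 0 = ec m 0 + ec m 1"
  by (cases m) (simp_all add: ec_def)

lemma choose_absorb: "Suc k * (n choose Suc k) = (n - k) * (n choose k)"
  using binomial_absorption[of k n] binomial_absorb_comp[of n k] by simp

lemma ec_rec: "ec (Suc m) (Suc j) = ec m j + ec m (Suc j) + (j + 2) * ec m (Suc (Suc j))"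
proof -
  have key: "(m choose Suc j) * invol (m - j) = (m choose Suc j) * invol (m - Suc j) + (j + 2) * ((m choose Suc (Suc j)) * invol (m - Suc (Suc j)))"
  proof (cases "Suc j \<le> m")
    case False then show ?thesis by simp
  next
    case True
    show ?thesis
    proof (cases "m - j = 1")
      case True
      then have "m < Suc (Suc j)" by simp
      then show ?thesis using True by simp
    next
      case False
      define t where "t = m - j - 2"
      have t: "m - j = Suc (Suc t)" unfolding t_def using True False by arith
      have t1: "m - Suc j = Suc t" "m - Suc (Suc j) = t" using t by auto
      have "invol (m - j) = invol (Suc t) + Suc t * invol t" using t by simp
      moreover have "(j + 2) * (m choose Suc (Suc j)) = Suc t * (m choose Suc j)"
        using choose_absorb[of "Suc j" m] t1 by simp
      ultimately show ?thesis unfolding t1 by (simp add: algebra_simps)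
    qed
  qed
  show ?thesis unfolding ec_def using key by (simp add: algebra_simps)
qed

lemma A_formula: "ferrers S \<Longrightarrow> Acnt m S = (\<Sum>j<m + 2. ec m j * Bcnt j S)"
proof (induction m arbitrary: S)
  case 0
  then show ?case by (simp add: ec_def numeral_2_eq_2)
next
  case (Suc m)
  note S = Suc.prems
  have fins: "finite (addable S)" by (rule finite_addable[OF S])
  have "Acnt (Suc m) S = (\<Sum>c\<in>addable S. \<Sum>j<m + 2. ec m j * Bcnt j (insert c S))"
  proof -
    have "Acnt (Suc m) S = (\<Sum>c\<in>addable S. Acnt m (insert c S))" by simp
    also have "\<dots> = (\<Sum>c\<in>addable S. \<Sum>j<m + 2. ec m j * Bcnt j (insert c S))"
      by (rule sum.cong[OF refl], rule Suc.IH) (auto simp: addable_def)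
    finally show ?thesis .
  qed
  also have "\<dots> = (\<Sum>j<m + 2. ec m j * (\<Sum>c\<in>addable S. Bcnt j (insert c S)))"
    by (subst sum.swap) (simp add: sum_distrib_left)
  also have "\<dots> = (\<Sum>j<m + 2. ec m j * (Bcnt (Suc j) S + Bcnt j S + j * Bcnt (j - 1) S))"
    using B_add[OF S] by simp
  also have "\<dots> = (\<Sum>j<m + 2. ec m j * Bcnt (Suc j) S) + (\<Sum>j<m + 2. ec m j * Bcnt j S)
      + (\<Sum>j<m + 2. ec m j * j * Bcnt (j - 1) S)"
    by (simp add: sum.distrib algebra_simps)
  also have "(\<Sum>j<m + 2. ec m j * Bcnt j S) = ec m 0 * Bcnt 0 S + (\<Sum>j<m + 2. ec m (Suc j) * Bcnt (Suc j) S)"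
  proof -
    have "(\<Sum>j<m + 2. ec m j * Bcnt j S) = ec m 0 * Bcnt 0 S + (\<Sum>j<m + 1. ec m (Suc j) * Bcnt (Suc j) S)"
      by (subst sum.lessThan_Suc_shift[symmetric]) simp
    also have "(\<Sum>j<m + 1. ec m (Suc j) * Bcnt (Suc j) S) = (\<Sum>j<m + 2. ec m (Suc j) * Bcnt (Suc j) S)"
      by (simp add: ec_zero)
    finally show ?thesis .
  qed
  also have "(\<Sum>j<m + 2. ec m j * j * Bcnt (j - 1) S) = ec m 1 * Bcnt 0 S + (\<Sum>j<m + 2. (j + 2) * ec m (Suc (Suc j)) * Bcnt (Suc j) S)"
  proof -
    have m2: "m + 2 = Suc (m + 1)" by simp
    have "(\<Sum>j<m + 2. ec m j * j * Bcnt (j - 1) S) = (\<Sum>j<m + 1. ec m (Suc j) * Suc j * Bcnt j S)"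
      unfolding m2 sum.lessThan_Suc_shift by simp
    also have "\<dots> = ec m 1 * Bcnt 0 S + (\<Sum>j<m. ec m (Suc (Suc j)) * Suc (Suc j) * Bcnt (Suc j) S)"
      unfolding Suc_eq_plus1[symmetric] sum.lessThan_Suc_shift by simp
    also have "(\<Sum>j<m. ec m (Suc (Suc j)) * Suc (Suc j) * Bcnt (Suc j) S) = (\<Sum>j<m + 2. (j + 2) * ec m (Suc (Suc j)) * Bcnt (Suc j) S)"
      by (simp add: ec_zero mult_ac)
    finally show ?thesis .
  qed
  finally have "Acnt (Suc m) S = (ec m 0 + ec m 1) * Bcnt 0 S +
      (\<Sum>j<m + 2. (ec m j + ec m (Suc j) + (j + 2) * ec m (Suc (Suc j))) * Bcnt (Suc j) S)"
    by (simp add: sum.distrib algebra_simps)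
  also have "\<dots> = ec (Suc m) 0 * Bcnt 0 S + (\<Sum>j<m + 2. ec (Suc m) (Suc j) * Bcnt (Suc j) S)"
    by (simp add: ec_rec ec_rec0)
  also have "\<dots> = (\<Sum>j<Suc m + 2. ec (Suc m) j * Bcnt j S)"
  proof -
    have m3: "Suc m + 2 = Suc (m + 2)" by simp
    show ?thesis unfolding m3 sum.lessThan_Suc_shift by simp
  qed
  finally show ?case .
qed


lemma Bcnt_empty: "Bcnt j {} = (if j = 0 then 1 else 0)"
  by (cases j) (auto simp: removable_def)

lemma card_SYT: "card (SYT n) = invol n"
proof -
  have "card (SYT n) = Acnt n {}" unfolding SYT_skew by (rule card_skew[OF ferrers_empty])
  also have "\<dots> = (\<Sum>j<n + 2. ec n j * Bcnt j {})" by (rule A_formula[OF ferrers_empty])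
  also have "\<dots> = (\<Sum>j\<in>{0}. ec n j * Bcnt j {})"
    by (rule sum.mono_neutral_right) (auto simp: Bcnt_empty)
  finally show ?thesis by (simp add: ec_def)
qed

definition col :: "nat \<Rightarrow> (nat \<times> nat) set" where "col a = {(i, 0) | i. i < a}"
definition hk :: "nat \<Rightarrow> (nat \<times> nat) set" where "hk a = insert (0, 1) (col a)"

lemma col_mem: "(i, j) \<in> col a \<longleftrightarrow> j = 0 \<and> i < a" by (auto simp: col_def)
lemma hk_mem: "(i, j) \<in> hk a \<longleftrightarrow> (i = 0 \<and> j = 1) \<or> (j = 0 \<and> i < a)" by (auto simp: hk_def col_def)

lemma ferrers_col: "ferrers (col a)"
proof (rule ferrersI)
  have "col a = (\<lambda>i. (i, 0)) ` {..<a}" by (auto simp: col_def)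
  then show "finite (col a)" by simp
qed (auto simp: col_mem)

lemma ferrers_hk: "a \<ge> 1 \<Longrightarrow> ferrers (hk a)"
proof (rule ferrersI)
  show "finite (hk a)" using ferrers_finite[OF ferrers_col] by (simp add: hk_def)
qed (auto simp: hk_mem)

lemma addable_col: "a \<ge> 1 \<Longrightarrow> addable (col a) = {(a, 0), (0, 1)}"
proof (rule set_eqI)
  fix x assume a: "a \<ge> 1"
  obtain i j :: nat where x: "x = (i, j)" by (cases x)
  show "x \<in> addable (col a) \<longleftrightarrow> x \<in> {(a, 0), (0, 1)}"
    unfolding x addable_iff[OF ferrers_col] col_mem using a by (cases j) auto
qed

lemma addable_empty: "addable {} = {(0, 0)}"
proof (rule set_eqI)
  fix x
  obtain i j :: nat where x: "x = (i, j)" by (cases x)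
  show "x \<in> addable {} \<longleftrightarrow> x \<in> {(0, 0)}"
    unfolding x addable_iff[OF ferrers_empty] by auto
qed

lemma insert_col: "insert (a, 0) (col a) = col (Suc a)" by (auto simp: col_def)

lemma psi_01: "c \<noteq> (0, 1) \<Longrightarrow> psi c T (0, 1) = (if T (0, 1) = 0 then 0 else Suc (T (0, 1)))"
  by (simp add: psi_def)

lemma Q_step:
  assumes a: "a \<ge> 1" and t: "t \<ge> 1"
  shows "card {T \<in> skew (col a) (Suc m). T (0, 1) = Suc t} = card {T \<in> skew (col (Suc a)) m. T (0, 1) = t}"
proof -
  have "card {T \<in> skew (col a) (Suc m). T (0, 1) = Suc t} =
     (\<Sum>c\<in>{(a, 0), (0, 1)}. card {T \<in> skew (insert c (col a)) m. psi c T (0, 1) = Suc t})"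
    using card_skew_Suc[OF ferrers_col, of a m "\<lambda>T. T (0, 1) = Suc t"] addable_col[OF a] by simp
  also have "\<dots> = card {T \<in> skew (insert (a, 0) (col a)) m. psi (a, 0) T (0, 1) = Suc t}
       + card {T \<in> skew (insert (0, 1) (col a)) m. psi (0, 1) T (0, 1) = Suc t}"
    using a by (subst sum.insert) auto
  also have "{T \<in> skew (insert (0, 1) (col a)) m. psi (0, 1) T (0, 1) = Suc t} = {}"
    using t by (auto simp: psi_def)
  also have "{T \<in> skew (insert (a, 0) (col a)) m. psi (a, 0) T (0, 1) = Suc t} = {T \<in> skew (col (Suc a)) m. T (0, 1) = t}"
    using t a unfolding insert_col by (auto simp: psi_def)
  finally show ?thesis by simp
qed

lemma Q_base:
  assumes a: "a \<ge> 1"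
  shows "card {T \<in> skew (col a) (Suc m). T (0, 1) = 1} = card (skew (hk a) m)"
proof -
  have "card {T \<in> skew (col a) (Suc m). T (0, 1) = 1} =
     (\<Sum>c\<in>{(a, 0), (0, 1)}. card {T \<in> skew (insert c (col a)) m. psi c T (0, 1) = 1})"
    using card_skew_Suc[OF ferrers_col, of a m "\<lambda>T. T (0, 1) = 1"] addable_col[OF a] by simp
  also have "\<dots> = card {T \<in> skew (insert (a, 0) (col a)) m. psi (a, 0) T (0, 1) = 1}
       + card {T \<in> skew (insert (0, 1) (col a)) m. psi (0, 1) T (0, 1) = 1}"
    using a by (subst sum.insert) auto
  also have "{T \<in> skew (insert (0, 1) (col a)) m. psi (0, 1) T (0, 1) = 1} = skew (hk a) m"
    by (auto simp: psi_def hk_def)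
  also have "{T \<in> skew (insert (a, 0) (col a)) m. psi (a, 0) T (0, 1) = 1} = {}"
    using a by (auto simp: psi_def)
  finally show ?thesis by simp
qed

lemma Q_iter: "a \<ge> 1 \<Longrightarrow> card {T \<in> skew (col a) (m + Suc t). T (0, 1) = Suc t} = card (skew (hk (a + t)) m)"
proof (induction t arbitrary: a)
  case 0 then show ?case using Q_base[of a m] by simp
next
  case (Suc t)
  have "card {T \<in> skew (col a) (m + Suc (Suc t)). T (0, 1) = Suc (Suc t)}
      = card {T \<in> skew (col (Suc a)) (m + Suc t). T (0, 1) = Suc t}"
    using Q_step[of a "Suc t" "m + Suc t"] Suc.prems by simp
  also have "\<dots> = card (skew (hk (Suc a + t)) m)" by (rule Suc.IH) simp
  finally show ?case by simp
qed

lemma count_hk: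
  assumes k: "k \<ge> 2" and n: "n \<ge> k"
  shows "card {T \<in> SYT n. T (0, 1) = k} = card (skew (hk (k - 1)) (n - k))"
proof -
  obtain t where t: "k = Suc (Suc t)" using k by (metis add_2_eq_Suc le_Suc_ex)
  obtain m where m: "n = m + k" using n by (metis add.commute le_Suc_ex)
  have "card {T \<in> SYT n. T (0, 1) = k} = card {T \<in> skew {} (Suc (m + Suc t)). T (0, 1) = Suc (Suc t)}"
    unfolding SYT_skew t m by simp
  also have "\<dots> = (\<Sum>c\<in>{(0, 0)}. card {T \<in> skew (insert c {}) (m + Suc t). psi c T (0, 1) = Suc (Suc t)})"
    using card_skew_Suc[OF ferrers_empty, of "m + Suc t" "\<lambda>T. T (0, 1) = Suc (Suc t)"] addable_empty by simp
  also have "\<dots> = card {T \<in> skew {(0, 0)} (m + Suc t). psi (0, 0) T (0, 1) = Suc (Suc t)}" by simp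
  also have "\<dots> = card {T \<in> skew (col 1) (m + Suc t). T (0, 1) = Suc t}"
  proof -
    have c1: "col 1 = {(0, 0)}" by (auto simp: col_def)
    have "{T \<in> skew {(0, 0)} (m + Suc t). psi (0, 0) T (0, 1) = Suc (Suc t)} = {T \<in> skew (col 1) (m + Suc t). T (0, 1) = Suc t}"
      unfolding c1 by (auto simp: psi_def)
    then show ?thesis by simp
  qed
  also have "\<dots> = card (skew (hk (1 + t)) m)" by (rule Q_iter) simp
  finally show ?thesis using t m by simp
qed


lemma removable_col: "removable (col (Suc a)) = {(a, 0)}"
proof (rule set_eqI)
  fix x obtain i j :: nat where x: "x = (i, j)" by (cases x)
  show "x \<in> removable (col (Suc a)) \<longleftrightarrow> x \<in> {(a, 0)}"
    unfolding x removable_iff[OF ferrers_col] col_mem by auto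
qed

lemma removable_col0: "removable (col 0) = {}"
  by (auto simp: removable_def col_def)

lemma col_minus: "col (Suc a) - {(a, 0)} = col a" by (auto simp: col_def)

lemma Bcnt_col: "Bcnt j (col a) = (if j \<le> a then 1 else 0)"
proof (induction j arbitrary: a)
  case 0 then show ?case by simp
next
  case (Suc j)
  show ?case
  proof (cases a)
    case 0 then show ?thesis by (simp add: removable_col0)
  next
    case (Suc a') then show ?thesis by (simp add: removable_col col_minus Suc.IH)
  qed
qed

lemma removable_hk1: "removable (hk 1) = {(0, 1)}"
proof (rule set_eqI)
  fix x obtain i j :: nat where x: "x = (i, j)" by (cases x)
  show "x \<in> removable (hk 1) \<longleftrightarrow> x \<in> {(0, 1)}"
    unfolding x removable_iff[OF ferrers_hk[of 1, OF order_refl]] hk_mem by auto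
qed

lemma removable_hk: "a \<ge> 2 \<Longrightarrow> removable (hk a) = {(0, 1), (a - 1, 0)}"
proof (rule set_eqI)
  fix x assume a: "a \<ge> 2"
  obtain i j :: nat where x: "x = (i, j)" by (cases x)
  have f: "ferrers (hk a)" using a by (intro ferrers_hk) simp
  show "x \<in> removable (hk a) \<longleftrightarrow> x \<in> {(0, 1), (a - 1, 0)}"
    unfolding x removable_iff[OF f] hk_mem using a by auto
qed

lemma hk_minus1: "hk a - {(0, 1)} = col a" by (auto simp: hk_def col_def)
lemma hk_minus1': "hk a - {(0, Suc 0)} = col a" by (auto simp: hk_def col_def)
lemma hk_minus2: "a \<ge> 1 \<Longrightarrow> hk a - {(a - 1, 0)} = hk (a - 1)" by (auto simp: hk_def col_def)
lemma hk_minus2': "a \<ge> 1 \<Longrightarrow> hk a - {(a - Suc 0, 0)} = hk (a - Suc 0)" by (auto simp: hk_def col_def)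

lemma Bcnt_hk: "a \<ge> 1 \<Longrightarrow> Bcnt j (hk a) = (if j + 1 \<le> a then j + 1 else if j \<le> a + 1 then a else 0)"
proof (induction j arbitrary: a)
  case 0 then show ?case by simp
next
  case (Suc j)
  show ?case
  proof (cases "a = 1")
    case True
    have "Bcnt (Suc j) (hk 1) = Bcnt j (col 1)" unfolding Bcnt.simps removable_hk1 by (simp add: hk_minus1 hk_minus1')
    then show ?thesis using True by (simp add: Bcnt_col)
  next
    case False
    then have a2: "a \<ge> 2" using Suc.prems by simp
    have "Bcnt (Suc j) (hk a) = Bcnt j (col a) + Bcnt j (hk (a - 1))"
      using a2 by (simp add: removable_hk hk_minus1 hk_minus2 hk_minus1' hk_minus2')
    also have "Bcnt j (hk (a - 1)) = (if j + 1 \<le> a - 1 then j + 1 else if j \<le> a - 1 + 1 then a - 1 else 0)"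
      using a2 by (intro Suc.IH) simp
    finally show ?thesis using a2 by (simp add: Bcnt_col; arith)
  qed
qed


lemma prob_eq:
  assumes k: "k \<ge> 3" and n: "n \<ge> 2 * k"
  shows "prob_entry_12 k n = (\<Sum>j\<le>k. TT k j n)"
proof -
  have fh: "ferrers (hk (k - 1))" using k by (intro ferrers_hk) simp
  have B: "Bcnt j (hk (k - 1)) = bh k j" for j
    using k by (simp add: Bcnt_hk bh_def; arith)
  have B': "Bcnt j (hk (k - Suc 0)) = bh k j" for j using B[of j] by simp
  have "card {T \<in> SYT n. T (0, 1) = k} = Acnt (n - k) (hk (k - 1))"
    using count_hk[of k n] k n card_skew[OF fh] by simp
  also have "\<dots> = (\<Sum>j<n - k + 2. ec (n - k) j * Bcnt j (hk (k - 1)))" by (rule A_formula[OF fh])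
  also have "\<dots> = (\<Sum>j\<le>k. ec (n - k) j * Bcnt j (hk (k - 1)))"
    by (rule sum.mono_neutral_right) (use n in \<open>auto simp: B B' bh_def\<close>)
  finally have c: "card {T \<in> SYT n. T (0, 1) = k} = (\<Sum>j\<le>k. ec (n - k) j * bh k j)" by (simp add: B B')
  have p: "real (invol n) > 0" using invol_pos[of n] by simp
  have "prob_entry_12 k n = (\<Sum>j\<le>k. real (ec (n - k) j * bh k j)) / real (invol n)"
    unfolding prob_entry_12_def c card_SYT by simp
  also have "\<dots> = (\<Sum>j\<le>k. real (ec (n - k) j * bh k j) / real (invol n))"
    by (simp add: sum_divide_distrib)
  also have "\<dots> = (\<Sum>j\<le>k. TT k j n)"
    by (rule sum.cong) (auto simp: TT_def rho_def ec_def)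
  finally show ?thesis .
qed

theorem theorem4:
  fixes k :: nat
  assumes "k \<ge> 3"
  shows "(\<lambda>n. prob_entry_12 k n - (real (k - 1) / fact k
            + (real k - 4) / (3 * fact (k - 3)) * (1 / real n powr (3/2))))
         \<in> O(\<lambda>n. 1 / real n ^ 2)"
proof -
  have M: "(\<lambda>n. (\<Sum>j\<le>k. TT k j n) - (real (k - 1) / fact k + (real k - 4) / (3 * fact (k - 3)) * ss n ^ 3))
           \<in> O(\<lambda>n. ss n ^ 4)" by (rule main_asy[OF assms])
  have e4: "(\<lambda>n. ss n ^ 4) = (\<lambda>n. 1 / real n ^ 2)"
  proof
    fix n show "ss n ^ 4 = 1 / real n ^ 2"
      by (simp add: ss_def power_divide power4_eq_xxxx power2_eq_square)
  qed
  have ev: "eventually (\<lambda>n. (\<Sum>j\<le>k. TT k j n) - (real (k - 1) / fact k + (real k - 4) / (3 * fact (k - 3)) * ss n ^ 3)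
      = prob_entry_12 k n - (real (k - 1) / fact k
            + (real k - 4) / (3 * fact (k - 3)) * (1 / real n powr (3/2)))) at_top"
  proof (intro eventually_at_top_linorderI[of "2 * k + 1"])
    fix n :: nat assume n: "n \<ge> 2 * k + 1"
    have np: "real n > 0" using n by simp
    have "real n powr (3/2) = real n powr 1 * real n powr (1/2)"
      by (subst powr_add[symmetric]) simp
    also have "\<dots> = sqrt (real n) ^ 3"
      using np by (simp add: powr_half_sqrt power3_eq_cube)
    finally have "ss n ^ 3 = 1 / real n powr (3/2)" by (simp add: ss_def power_divide)
    then show "(\<Sum>j\<le>k. TT k j n) - (real (k - 1) / fact k + (real k - 4) / (3 * fact (k - 3)) * ss n ^ 3)
      = prob_entry_12 k n - (real (k - 1) / fact k
            + (real k - 4) / (3 * fact (k - 3)) * (1 / real n powr (3/2)))"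
      using prob_eq[OF assms, of n] n by simp
  qed
  show ?thesis using M unfolding e4 using landau_o.big.in_cong[OF ev] by simp
qed

end
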